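(* Let $A=\bigoplus_{j=1}^k M_{n_j}(\mathbb{C})$ and $B=\bigoplus_{j=1}^l M_{m_j}(\mathbb{C})$, and let $\phi:A\to B$ be an injective unital *-homomorphism. If $\phi$ is an $L_{\min}$-embedding, then $\operatorname{mult}_\phi(M_{n_j}(\mathbb{C}))=1$ for each $j=1,\dots,k$.
   Context: For a unital C*-algebra $D$, $\rho_{\min}^D(x)=\inf\{\|x-p\|: p\in D \text{ a minimal projection}\}$, where a minimal projection is a nonzero $p=p^2=p^*$ such that any projection $q$ with $qp=q$ satisfies $q=0$ or $q=p$. $L_{\min}$ is the language of unital C*-algebras with an extra unary predicate $P_{\min}$ interpreted in each algebra $D$ as $\rho_{\min}^D$; an $L_{\min}$-embedding is an injective unital *-homomorphism $\phi$ with $\rho_{\min}^B(\phi(a))=\rho_{\min}^A(a)$ for all $a\in A$. For an embedding $\phi:A\to B$, $E_\phi(n_i,m_j)$ denotes the multiplicity with which $\phi$ embeds the summand $M_{n_i}(\mathbb{C})$ of $A$ into the summand $M_{m_j}(\mathbb{C})$ of $B$ (i.e. the partial map $M_{n_i}(\mathbb{C})\to M_{m_j}(\mathbb{C})$ obtained by restricting and projecting is unitarily conjugate to $x\mapsto x\otimes 1_{E_\phi(n_i,m_j)}$ plus zero), and $\operatorname{mult}_\phi(M_{n_i}(\mathbb{C}))=\sum_{j=1}^l E_\phi(n_i,m_j)$. *)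

theory Defs
  imports "HOL-Analysis.Analysis" "Jordan_Normal_Form.Matrix"
begin

definition cadj :: "complex mat \<Rightarrow> complex mat" where
  "cadj A = mat (dim_col A) (dim_row A) (\<lambda>(i,j). cnj (A $$ (j,i)))"

definition vnorm :: "complex vec \<Rightarrow> real" where
  "vnorm v = sqrt (\<Sum>i<dim_vec v. (cmod (v $ i))^2)"

definition opnorm :: "complex mat \<Rightarrow> real" where
  "opnorm A = Sup {vnorm (A *\<^sub>v v) | v. v \<in> carrier_vec (dim_col A) \<and> vnorm v \<le> 1}"

definition unitary_mat :: "nat \<Rightarrow> complex mat \<Rightarrow> bool" where
  "unitary_mat m U \<longleftrightarrow> U \<in> carrier_mat m m \<and> cadj U * U = 1\<^sub>m m \<and> U * cadj U = 1\<^sub>m m"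

section \<open>The C*-algebra M_{n_1}(C) (+) ... (+) M_{n_k}(C), given by the list ns = [n_1,...,n_k]\<close>

definition bcarrier :: "nat list \<Rightarrow> complex mat list set" where
  "bcarrier ns = {xs. length xs = length ns \<and> (\<forall>j<length ns. xs ! j \<in> carrier_mat (ns ! j) (ns ! j))}"

definition bzero :: "nat list \<Rightarrow> complex mat list" where
  "bzero ns = map (\<lambda>n. 0\<^sub>m n n) ns"

definition bone :: "nat list \<Rightarrow> complex mat list" where
  "bone ns = map (\<lambda>n. 1\<^sub>m n) ns"

definition badd :: "complex mat list \<Rightarrow> complex mat list \<Rightarrow> complex mat list" where
  "badd xs ys = map2 (+) xs ys"

definition bsub :: "complex mat list \<Rightarrow> complex mat list \<Rightarrow> complex mat list" where
  "bsub xs ys = map2 (-) xs ys"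

definition bsmult :: "complex \<Rightarrow> complex mat list \<Rightarrow> complex mat list" where
  "bsmult c xs = map (\<lambda>x. c \<cdot>\<^sub>m x) xs"

definition bmult :: "complex mat list \<Rightarrow> complex mat list \<Rightarrow> complex mat list" where
  "bmult xs ys = map2 (*) xs ys"

definition badj :: "complex mat list \<Rightarrow> complex mat list" where
  "badj xs = map cadj xs"

definition bnorm :: "complex mat list \<Rightarrow> real" where
  "bnorm xs = Max (insert 0 (opnorm ` set xs))"

definition is_proj :: "nat list \<Rightarrow> complex mat list \<Rightarrow> bool" where
  "is_proj ns p \<longleftrightarrow> p \<in> bcarrier ns \<and> bmult p p = p \<and> badj p = p"

definition min_proj :: "nat list \<Rightarrow> complex mat list \<Rightarrow> bool" where
  "min_proj ns p \<longleftrightarrow> is_proj ns p \<and> p \<noteq> bzero ns \<and>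
     (\<forall>q. is_proj ns q \<and> bmult q p = q \<longrightarrow> q = bzero ns \<or> q = p)"

definition rho_min :: "nat list \<Rightarrow> complex mat list \<Rightarrow> real" where
  "rho_min ns x = Inf {bnorm (bsub x p) | p. min_proj ns p}"

definition star_hom :: "nat list \<Rightarrow> nat list \<Rightarrow> (complex mat list \<Rightarrow> complex mat list) \<Rightarrow> bool" where
  "star_hom ns ms \<phi> \<longleftrightarrow>
     (\<forall>x\<in>bcarrier ns. \<phi> x \<in> bcarrier ms) \<and>
     (\<forall>x\<in>bcarrier ns. \<forall>y\<in>bcarrier ns. \<phi> (badd x y) = badd (\<phi> x) (\<phi> y)) \<and>
     (\<forall>c. \<forall>x\<in>bcarrier ns. \<phi> (bsmult c x) = bsmult c (\<phi> x)) \<and>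
     (\<forall>x\<in>bcarrier ns. \<forall>y\<in>bcarrier ns. \<phi> (bmult x y) = bmult (\<phi> x) (\<phi> y)) \<and>
     (\<forall>x\<in>bcarrier ns. \<phi> (badj x) = badj (\<phi> x))"

definition unital_inj_star_hom :: "nat list \<Rightarrow> nat list \<Rightarrow> (complex mat list \<Rightarrow> complex mat list) \<Rightarrow> bool" where
  "unital_inj_star_hom ns ms \<phi> \<longleftrightarrow>
     star_hom ns ms \<phi> \<and> \<phi> (bone ns) = bone ms \<and> inj_on \<phi> (bcarrier ns)"

definition Lmin_embedding :: "nat list \<Rightarrow> nat list \<Rightarrow> (complex mat list \<Rightarrow> complex mat list) \<Rightarrow> bool" where
  "Lmin_embedding ns ms \<phi> \<longleftrightarrow>
     unital_inj_star_hom ns ms \<phi> \<and> (\<forall>a\<in>bcarrier ns. rho_min ms (\<phi> a) = rho_min ns a)"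

definition binc :: "nat list \<Rightarrow> nat \<Rightarrow> complex mat \<Rightarrow> complex mat list" where
  "binc ns i x = map (\<lambda>j. if j = i then x else 0\<^sub>m (ns ! j) (ns ! j)) [0..<length ns]"

text \<open>The m x m matrix (x \<otimes> 1_E) \<oplus> 0, for x an n x n matrix (requires n*E \<le> m);
  the row index a*E+b corresponds to the pair (a,b).\<close>
definition tensor_pad :: "nat \<Rightarrow> nat \<Rightarrow> nat \<Rightarrow> complex mat \<Rightarrow> complex mat" where
  "tensor_pad n E m x = mat m m (\<lambda>(r,s).
     if r < n * E \<and> s < n * E \<and> r mod E = s mod E then x $$ (r div E, s div E) else 0)"

definition Emult :: "nat list \<Rightarrow> nat list \<Rightarrow> (complex mat list \<Rightarrow> complex mat list) \<Rightarrow> nat \<Rightarrow> nat \<Rightarrow> nat" where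
  "Emult ns ms \<phi> i j = (THE E. ns ! i * E \<le> ms ! j \<and>
     (\<exists>U. unitary_mat (ms ! j) U \<and>
       (\<forall>x\<in>carrier_mat (ns ! i) (ns ! i).
          (\<phi> (binc ns i x)) ! j = U * tensor_pad (ns ! i) E (ms ! j) x * cadj U)))"

definition mult :: "nat list \<Rightarrow> nat list \<Rightarrow> (complex mat list \<Rightarrow> complex mat list) \<Rightarrow> nat \<Rightarrow> nat" where
  "mult ns ms \<phi> i = (\<Sum>j<length ms. Emult ns ms \<phi> i j)"

end

theory Submission
  imports Defs "Jordan_Normal_Form.Determinant"
begin

no_notation Finite_Cartesian_Product.vec.vec_nth (infixl "$" 90)


definition ip :: "complex vec \<Rightarrow> complex vec \<Rightarrow> complex" where
  "ip u v = (\<Sum>i<dim_vec u. u$i * cnj (v$i))"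

lemma mv_index:
  assumes "A \<in> carrier_mat m k" "v \<in> carrier_vec k" "i < m"
  shows "(A *\<^sub>v v)$i = (\<Sum>j<k. A$$(i,j) * v$j)"
  using assms by (auto simp: scalar_prod_def lessThan_atLeast0 intro!: sum.cong)

lemma cadj_carrier[simp]: "A \<in> carrier_mat m k \<Longrightarrow> cadj A \<in> carrier_mat k m"
  by (auto simp: cadj_def)

lemma cadj_dims[simp]: "dim_row (cadj A) = dim_col A" "dim_col (cadj A) = dim_row A"
  by (auto simp: cadj_def)

lemma cadj_index[simp]: "i < dim_col A \<Longrightarrow> j < dim_row A \<Longrightarrow> cadj A $$ (i,j) = cnj (A $$ (j,i))"
  by (auto simp: cadj_def)

lemma cadj_cadj[simp]: "cadj (cadj A) = A"
  by (auto simp: cadj_def intro!: eq_matI)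

lemma cadj_mult:
  assumes "A \<in> carrier_mat m k" "B \<in> carrier_mat k l"
  shows "cadj (A * B) = cadj B * cadj A"
  using assms by (auto simp: cadj_def scalar_prod_def intro!: eq_matI sum.cong simp: mult.commute)

lemma cadj_add:
  assumes "A \<in> carrier_mat m k" "B \<in> carrier_mat m k"
  shows "cadj (A + B) = cadj A + cadj B"
  using assms by (auto simp: cadj_def intro!: eq_matI)

lemma cadj_smult: "cadj (c \<cdot>\<^sub>m A) = cnj c \<cdot>\<^sub>m cadj A"
  by (auto simp: cadj_def intro!: eq_matI)

lemma cadj_zero[simp]: "cadj (0\<^sub>m m k) = 0\<^sub>m k m"
  by (auto simp: cadj_def intro!: eq_matI)

lemma cadj_one[simp]: "cadj (1\<^sub>m m) = 1\<^sub>m m"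
  by (auto simp: cadj_def intro!: eq_matI)

lemma ip_adj:
  assumes A: "A \<in> carrier_mat m k" and v: "v \<in> carrier_vec k" and w: "w \<in> carrier_vec m"
  shows "ip (A *\<^sub>v v) w = ip v (cadj A *\<^sub>v w)"
proof -
  have "ip (A *\<^sub>v v) w = (\<Sum>i<m. (\<Sum>j<k. A$$(i,j) * v$j) * cnj (w$i))"
    unfolding ip_def using assms mv_index[OF A v] by (auto intro!: sum.cong)
  also have "\<dots> = (\<Sum>i<m. \<Sum>j<k. A$$(i,j) * v$j * cnj (w$i))"
    by (simp add: sum_distrib_right)
  also have "\<dots> = (\<Sum>j<k. \<Sum>i<m. A$$(i,j) * v$j * cnj (w$i))"
    by (rule sum.swap)
  also have "\<dots> = (\<Sum>j<k. v$j * cnj (\<Sum>i<m. cadj A $$ (j,i) * w$i))"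
    using assms by (auto simp: sum_distrib_left intro!: sum.cong)
  also have "\<dots> = ip v (cadj A *\<^sub>v w)"
    unfolding ip_def using assms mv_index[OF cadj_carrier[OF A] w] by (auto intro!: sum.cong)
  finally show ?thesis .
qed

lemma ip_add_left: "u \<in> carrier_vec m \<Longrightarrow> v \<in> carrier_vec m \<Longrightarrow> ip (u + v) w = ip u w + ip v w"
  by (auto simp: ip_def sum.distrib algebra_simps)

lemma ip_add_right: "u \<in> carrier_vec m \<Longrightarrow> v \<in> carrier_vec m \<Longrightarrow> w \<in> carrier_vec m \<Longrightarrow> ip w (u + v) = ip w u + ip w v"
  by (auto simp: ip_def sum.distrib algebra_simps)

lemma ip_minus_left: "u \<in> carrier_vec m \<Longrightarrow> v \<in> carrier_vec m \<Longrightarrow> ip (u - v) w = ip u w - ip v w"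
  by (auto simp: ip_def sum_subtractf algebra_simps)

lemma ip_minus_right: "u \<in> carrier_vec m \<Longrightarrow> v \<in> carrier_vec m \<Longrightarrow> w \<in> carrier_vec m \<Longrightarrow> ip w (u - v) = ip w u - ip w v"
  by (auto simp: ip_def sum_subtractf algebra_simps)

lemma ip_smult_left: "ip (c \<cdot>\<^sub>v u) w = c * ip u w"
  by (auto simp: ip_def sum_distrib_left algebra_simps)

lemma ip_smult_right: "u \<in> carrier_vec m \<Longrightarrow> w \<in> carrier_vec m \<Longrightarrow> ip u (c \<cdot>\<^sub>v w) = cnj c * ip u w"
  by (auto simp: ip_def sum_distrib_left algebra_simps)

lemma ip_sym: "u \<in> carrier_vec m \<Longrightarrow> w \<in> carrier_vec m \<Longrightarrow> ip w u = cnj (ip u w)"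
  by (auto simp: ip_def algebra_simps)

lemma ip_zero_left[simp]: "ip (0\<^sub>v m) w = 0"
  by (auto simp: ip_def)

lemma ip_zero_right[simp]: "u \<in> carrier_vec m \<Longrightarrow> ip u (0\<^sub>v m) = 0"
  by (auto simp: ip_def)

lemma ip_self: "ip u u = complex_of_real ((vnorm u)^2)"
proof -
  have "ip u u = (\<Sum>i<dim_vec u. complex_of_real ((cmod (u$i))^2))"
    unfolding ip_def by (auto intro!: sum.cong simp: complex_norm_square[symmetric])
  also have "\<dots> = complex_of_real (\<Sum>i<dim_vec u. (cmod (u$i))^2)" by simp
  also have "\<dots> = complex_of_real ((vnorm u)^2)"
    unfolding vnorm_def by (subst real_sqrt_pow2) (auto intro: sum_nonneg)
  finally show ?thesis .
qed

lemma vnorm_nonneg: "vnorm u \<ge> 0" unfolding vnorm_def by (auto intro: sum_nonneg)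

lemma ip_self_zero: "u \<in> carrier_vec m \<Longrightarrow> ip u u = 0 \<longleftrightarrow> u = 0\<^sub>v m"
proof
  assume u: "u \<in> carrier_vec m" and z: "ip u u = 0"
  have "(vnorm u)^2 = 0" using z unfolding ip_self by simp
  hence "(\<Sum>i<m. (cmod (u$i))^2) = 0"
    using u unfolding vnorm_def by (subst (asm) real_sqrt_pow2) (auto simp: sum_nonneg)
  hence "\<forall>i\<in>{..<m}. (cmod (u$i))^2 = 0" by (subst (asm) sum_nonneg_eq_0_iff) auto
  thus "u = 0\<^sub>v m" using u by (auto intro!: eq_vecI)
qed (auto simp: ip_def)

lemma vnorm_one_iff: "vnorm u = 1 \<longleftrightarrow> ip u u = 1"
proof -
  have "vnorm u = 1 \<longleftrightarrow> (vnorm u)^2 = 1" using vnorm_nonneg[of u]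
    by (auto simp: power2_eq_1_iff)
  thus ?thesis unfolding ip_self by (metis of_real_eq_1_iff)
qed


lemma opnorm_ge:
  assumes A: "A \<in> carrier_mat m k" and w: "w \<in> carrier_vec k" and wn: "vnorm w \<le> 1"
  shows "vnorm (A *\<^sub>v w) \<le> opnorm A"
proof -
  define M where "M = (\<Sum>i<m. \<Sum>j<k. cmod (A$$(i,j)))"
  have bd: "vnorm (A *\<^sub>v v) \<le> sqrt (real m * M^2)" if v: "v \<in> carrier_vec k" "vnorm v \<le> 1" for v
  proof -
    have vj: "cmod (v$j) \<le> 1" if j: "j < k" for j
    proof -
      have "(cmod (v$j))^2 \<le> (\<Sum>i<dim_vec v. (cmod (v $ i))^2)"
        by (rule member_le_sum) (use j v in auto)
      hence "sqrt ((cmod (v$j))^2) \<le> vnorm v" unfolding vnorm_def by (rule real_sqrt_le_mono)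
      thus ?thesis using v by simp
    qed
    have Mi: "cmod ((A *\<^sub>v v)$i) \<le> M" if i: "i < m" for i
    proof -
      have "cmod ((A *\<^sub>v v)$i) = cmod (\<Sum>j<k. A$$(i,j) * v$j)" using mv_index[OF A v(1) i] by simp
      also have "\<dots> \<le> (\<Sum>j<k. cmod (A$$(i,j) * v$j))" by (rule norm_sum)
      also have "\<dots> \<le> (\<Sum>j<k. cmod (A$$(i,j)))"
        by (rule sum_mono) (auto simp: norm_mult intro!: mult_left_le[OF vj])
      also have "\<dots> \<le> M" unfolding M_def
        by (rule member_le_sum[where f = "\<lambda>i. \<Sum>j<k. cmod (A$$(i,j))"]) (use i in \<open>auto intro: sum_nonneg\<close>)
      finally show ?thesis .
    qed
    have "(\<Sum>i<dim_vec (A *\<^sub>v v). (cmod ((A *\<^sub>v v) $ i))^2) = (\<Sum>i<m. (cmod ((A *\<^sub>v v) $ i))^2)"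
      using A by simp
    also have "\<dots> \<le> (\<Sum>i<m. M^2)"
      apply (rule sum_mono) apply (rule power_mono[OF Mi]) by auto
    also have "\<dots> = real m * M^2" by simp
    finally show ?thesis unfolding vnorm_def by (rule real_sqrt_le_mono)
  qed
  have "vnorm (A *\<^sub>v w) \<le> Sup {vnorm (A *\<^sub>v v) | v. v \<in> carrier_vec (dim_col A) \<and> vnorm v \<le> 1}"
    by (rule cSup_upper) (use A w wn bd in \<open>auto simp: bdd_above_def\<close>)
  thus ?thesis unfolding opnorm_def .
qed

definition orthonormal :: "nat \<Rightarrow> complex vec list \<Rightarrow> bool" where
  "orthonormal m L \<longleftrightarrow> set L \<subseteq> carrier_vec m \<and>
     (\<forall>i<length L. \<forall>j<length L. ip (L!i) (L!j) = (if i = j then 1 else 0))"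

lemma orthonormal_snoc:
  assumes L: "orthonormal m L" and y: "y \<in> carrier_vec m" "ip y y = 1"
    and perp: "\<forall>l\<in>set L. ip l y = 0"
  shows "orthonormal m (L @ [y])"
proof -
  have perp2: "ip y l = 0" if "l \<in> set L" for l
    using perp that L y ip_sym[of l m y] unfolding orthonormal_def by auto
  show ?thesis using L y perp perp2 unfolding orthonormal_def
    by (auto simp: nth_append less_Suc_eq)
qed

lemma normalize_vec:
  assumes y: "y \<in> carrier_vec m" "y \<noteq> 0\<^sub>v m"
  shows "\<exists>c. c \<noteq> 0 \<and> ip (c \<cdot>\<^sub>v y) (c \<cdot>\<^sub>v y) = 1"
proof -
  have nz: "vnorm y \<noteq> 0" using ip_self_zero[OF y(1)] y(2) unfolding ip_self by auto
  define c where "c = complex_of_real (1 / vnorm y)"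
  have "ip (c \<cdot>\<^sub>v y) (c \<cdot>\<^sub>v y) = c * cnj c * ip y y"
    using y by (simp add: ip_smult_left ip_smult_right[of y m])
  also have "\<dots> = 1" unfolding c_def ip_self using nz
    by (simp add: power2_eq_square field_simps flip: of_real_mult)
  finally have "ip (c \<cdot>\<^sub>v y) (c \<cdot>\<^sub>v y) = 1" .
  moreover have "c \<noteq> 0" using nz unfolding c_def by simp
  ultimately show ?thesis by blast
qed

definition colsmat :: "nat \<Rightarrow> complex vec list \<Rightarrow> complex mat" where
  "colsmat m L = mat m m (\<lambda>(r,t). L!t $ r)"

lemma colsmat_carrier[simp]: "colsmat m L \<in> carrier_mat m m"
  by (simp add: colsmat_def)

lemma colsmat_dims[simp]: "dim_row (colsmat m L) = m" "dim_col (colsmat m L) = m"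
  by (simp_all add: colsmat_def)

lemma colsmat_unitary:
  assumes L: "orthonormal m L" "length L = m"
  shows "unitary_mat m (colsmat m L)"
proof -
  let ?V = "colsmat m L"
  have 1: "cadj ?V * ?V = 1\<^sub>m m"
  proof (rule eq_matI)
    fix s t assume st: "s < dim_row (1\<^sub>m m)" "t < dim_col (1\<^sub>m m)"
    have "L!t \<in> set L" using st L(2) by simp
    hence Lt: "L!t \<in> carrier_vec m" using L(1) unfolding orthonormal_def by blast
    have "(cadj ?V * ?V) $$ (s,t) = (\<Sum>r<m. L!t $ r * cnj (L!s $ r))"
      using st by (auto simp: colsmat_def scalar_prod_def lessThan_atLeast0 mult.commute intro!: sum.cong)
    also have "\<dots> = ip (L!t) (L!s)" unfolding ip_def using Lt by auto
    also have "\<dots> = 1\<^sub>m m $$ (s,t)" using L st unfolding orthonormal_def by auto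
    finally show "(cadj ?V * ?V) $$ (s,t) = 1\<^sub>m m $$ (s,t)" .
  qed auto
  have 2: "?V * cadj ?V = 1\<^sub>m m"
    by (rule mat_mult_left_right_inverse[OF _ _ 1]) auto
  show ?thesis unfolding unitary_mat_def using 1 2 by auto
qed

lemma orthonormal_take: "orthonormal m L \<Longrightarrow> orthonormal m (take k L)"
  unfolding orthonormal_def by (auto dest: in_set_takeD)

lemma unitary_mult_vec_cancel:
  assumes "unitary_mat m U" "y \<in> carrier_vec m"
  shows "U *\<^sub>v (cadj U *\<^sub>v y) = y"
proof -
  have "U *\<^sub>v (cadj U *\<^sub>v y) = (U * cadj U) *\<^sub>v y"
    using assms unfolding unitary_mat_def by (subst assoc_mult_mat_vec[symmetric]) auto
  thus ?thesis using assms unfolding unitary_mat_def by auto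
qed

lemma orthonormal_length:
  assumes L: "orthonormal m L"
  shows "length L \<le> m"
proof (rule ccontr)
  assume "\<not> length L \<le> m"
  hence lm: "m < length L" by simp
  define L' where "L' = take m L"
  have L': "orthonormal m L'" "length L' = m" using orthonormal_take[OF L] lm unfolding L'_def by auto
  define V where "V = colsmat m L'"
  have U: "unitary_mat m V" unfolding V_def by (rule colsmat_unitary[OF L'])
  define y where "y = L!m"
  have y: "y \<in> carrier_vec m" using L lm unfolding orthonormal_def y_def by auto
  have "cadj V *\<^sub>v y = 0\<^sub>v m"
  proof (rule eq_vecI)
    fix s assume s: "s < dim_vec (0\<^sub>v m)"
    have s': "s < m" using s by simp
    have "(cadj V *\<^sub>v y) $ s = (\<Sum>r<m. cadj V $$ (s,r) * y $ r)"
      unfolding V_def by (rule mv_index[OF cadj_carrier[OF colsmat_carrier] y s'])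
    also have "\<dots> = (\<Sum>r<m. cnj (L!s $ r) * y $ r)"
      using s' lm by (auto simp: V_def colsmat_def L'_def intro!: sum.cong)
    also have "\<dots> = ip y (L!s)" unfolding ip_def using y by (auto intro!: sum.cong simp: mult.commute)
    also have "\<dots> = 0" using L lm s unfolding orthonormal_def y_def by auto
    finally show "(cadj V *\<^sub>v y) $ s = 0\<^sub>v m $ s" using s by simp
  qed (use U in \<open>auto simp: V_def colsmat_def\<close>)
  hence "y = V *\<^sub>v 0\<^sub>v m" using unitary_mult_vec_cancel[OF U y] by simp
  also have "\<dots> = 0\<^sub>v m" unfolding V_def using colsmat_carrier[of m L'] by auto
  finally have "y = 0\<^sub>v m" .
  hence "ip y y = 0" by simp
  moreover have "ip y y = 1" using L lm unfolding orthonormal_def y_def by auto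
  ultimately show False by simp
qed


lemma exists_perp:
  assumes L: "set L \<subseteq> carrier_vec m" and k: "length L < m"
  shows "\<exists>u \<in> carrier_vec m. u \<noteq> 0\<^sub>v m \<and> (\<forall>l\<in>set L. ip u l = 0)"
proof -
  define k where "k = length L"
  define M where "M = mat m m (\<lambda>(i,j). if i < k then cnj (L!i $ j) else (0::complex))"
  have M: "M \<in> carrier_mat m m" unfolding M_def by simp
  have eq: "M = mat\<^sub>r m m (\<lambda>i. if i = k then 0\<^sub>v m else row M i)"
    by (rule eq_matI) (auto simp: M_def)
  have "det M = 0"
    apply (subst eq) apply (rule det_row_0) using k M by (auto simp: k_def)
  then obtain v where v: "v \<in> carrier_vec m" "v \<noteq> 0\<^sub>v m" "M *\<^sub>v v = 0\<^sub>v m"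
    using det_0_iff_vec_prod_zero_field[OF M] by blast
  have "ip v l = 0" if l: "l \<in> set L" for l
  proof -
    obtain i where i: "i < k" "l = L!i" using l unfolding k_def by (auto simp: in_set_conv_nth)
    have li: "l \<in> carrier_vec m" using L l by auto
    have im: "i < m" using i k unfolding k_def by simp
    have "0 = (M *\<^sub>v v) $ i" using v im by simp
    also have "\<dots> = (\<Sum>j<m. M $$ (i,j) * v $ j)" by (rule mv_index[OF M v(1) im])
    also have "\<dots> = (\<Sum>j<m. v $ j * cnj (l $ j))"
      using i im by (auto simp: M_def mult.commute intro!: sum.cong)
    also have "\<dots> = ip v l" unfolding ip_def using v by simp
    finally show ?thesis by simp
  qed
  thus ?thesis using v by blast
qed


definition mu :: "nat \<Rightarrow> nat \<Rightarrow> nat \<Rightarrow> complex mat" where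
  "mu n a b = mat n n (\<lambda>(r,s). if r = a \<and> s = b then 1 else 0)"

lemma mu_carrier[simp]: "mu n a b \<in> carrier_mat n n" by (simp add: mu_def)
lemma mu_dims[simp]: "dim_row (mu n a b) = n" "dim_col (mu n a b) = n" by (simp_all add: mu_def)

lemma sum_if_eq: "k < (n::nat) \<Longrightarrow> (\<Sum>j<n. if j = k then (f j :: complex) else 0) = f k"
  by (subst sum.delta) auto

lemma mu_mult:
  assumes "b < n" "c < n"
  shows "mu n a b * mu n c d = (if b = c then mu n a d else 0\<^sub>m n n)"
proof (rule eq_matI)
  fix r s assume rs: "r < dim_row (if b = c then mu n a d else 0\<^sub>m n n)" "s < dim_col (if b = c then mu n a d else 0\<^sub>m n n)"
  hence rs': "r < n" "s < n" by (auto split: if_splits)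
  have "(mu n a b * mu n c d) $$ (r,s) = (\<Sum>k<n. (if r = a \<and> k = b then 1 else 0) * (if k = c \<and> s = d then 1 else 0))"
    using rs' by (auto simp: mu_def scalar_prod_def lessThan_atLeast0 intro!: sum.cong)
  also have "\<dots> = (\<Sum>k<n. if k = b then (if r = a \<and> b = c \<and> s = d then 1 else 0) else 0)"
    by (rule sum.cong) auto
  also have "\<dots> = (if r = a \<and> b = c \<and> s = d then 1 else 0)"
    using assms by (simp add: sum_if_eq)
  finally show "(mu n a b * mu n c d) $$ (r,s) = (if b = c then mu n a d else 0\<^sub>m n n) $$ (r,s)"
    using rs' by (auto simp: mu_def)
qed (auto)

lemma cadj_mu: "cadj (mu n a b) = mu n b a"
  by (auto simp: cadj_def mu_def intro!: eq_matI)

lemma mu_sandwich: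
  assumes x: "x \<in> carrier_mat n n" and a: "a < n" and b: "b < n" and n: "0 < n"
  shows "mu n 0 b * x * mu n a 0 = x $$ (b,a) \<cdot>\<^sub>m mu n 0 0"
proof (rule eq_matI)
  fix r s assume rs: "r < dim_row (x $$ (b,a) \<cdot>\<^sub>m mu n 0 0)" "s < dim_col (x $$ (b,a) \<cdot>\<^sub>m mu n 0 0)"
  hence rs': "r < n" "s < n" by auto
  have 1: "(mu n 0 b * x) $$ (r,l) = (if r = 0 then x $$ (b,l) else 0)" if l: "l < n" for l
  proof -
    have "(mu n 0 b * x) $$ (r,l) = (\<Sum>k<n. (if r = 0 \<and> k = b then 1 else 0) * x $$ (k,l))"
      using rs' l x by (auto simp: mu_def scalar_prod_def lessThan_atLeast0 intro!: sum.cong)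
    also have "\<dots> = (\<Sum>k<n. if k = b then (if r = 0 then x $$ (b,l) else 0) else 0)"
      by (rule sum.cong) auto
    also have "\<dots> = (if r = 0 then x $$ (b,l) else 0)" using b by (simp add: sum_if_eq)
    finally show ?thesis .
  qed
  have "(mu n 0 b * x * mu n a 0) $$ (r,s) = (\<Sum>l<n. (mu n 0 b * x) $$ (r,l) * (if l = a \<and> s = 0 then 1 else 0))"
    using rs' x by (auto simp: mu_def scalar_prod_def lessThan_atLeast0 intro!: sum.cong)
  also have "\<dots> = (\<Sum>l<n. if l = a then (if r = 0 \<and> s = 0 then x $$ (b,a) else 0) else 0)"
    by (rule sum.cong) (auto simp: 1)
  also have "\<dots> = (if r = 0 \<and> s = 0 then x $$ (b,a) else 0)" using a by (simp add: sum_if_eq)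
  finally show "(mu n 0 b * x * mu n a 0) $$ (r,s) = (x $$ (b,a) \<cdot>\<^sub>m mu n 0 0) $$ (r,s)"
    using rs' by (auto simp: mu_def)
qed (use x in auto)

fun msum :: "nat \<Rightarrow> (nat \<Rightarrow> complex mat) \<Rightarrow> nat \<Rightarrow> complex mat" where
  "msum d g 0 = 0\<^sub>m d d"
| "msum d g (Suc k) = msum d g k + g k"

lemma msum_carrier: "(\<And>a. a < k \<Longrightarrow> g a \<in> carrier_mat d d) \<Longrightarrow> msum d g k \<in> carrier_mat d d"
  by (induction k) auto

lemma msum_index:
  assumes "\<And>a. a < k \<Longrightarrow> g a \<in> carrier_mat d d" "r < d" "s < d"
  shows "msum d g k $$ (r,s) = (\<Sum>a<k. g a $$ (r,s))"
  using assms
proof (induction k)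
  case (Suc k)
  have c1: "msum d g k \<in> carrier_mat d d" by (rule msum_carrier) (use Suc in auto)
  have c2: "g k \<in> carrier_mat d d" using Suc by auto
  have "(msum d g k + g k) $$ (r,s) = msum d g k $$ (r,s) + g k $$ (r,s)"
    using c2 Suc.prems by (intro index_add_mat(1)) auto
  thus ?case using Suc by auto
qed auto

lemma one_msum: "1\<^sub>m n = msum n (\<lambda>a. mu n a a) n"
proof (rule eq_matI)
  fix r s assume "r < dim_row (msum n (\<lambda>a. mu n a a) n)" "s < dim_col (msum n (\<lambda>a. mu n a a) n)"
  hence rs: "r < n" "s < n" using msum_carrier[of n "\<lambda>a. mu n a a" n] by auto
  have "msum n (\<lambda>a. mu n a a) n $$ (r,s) = (\<Sum>a<n. mu n a a $$ (r,s))"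
    using rs by (subst msum_index) auto
  also have "\<dots> = (\<Sum>a<n. if a = r then (if r = s then 1 else 0) else 0)"
    using rs by (intro sum.cong) (auto simp: mu_def)
  also have "\<dots> = 1\<^sub>m n $$ (r,s)" using rs by (simp add: sum_if_eq)
  finally show "1\<^sub>m n $$ (r,s) = msum n (\<lambda>a. mu n a a) n $$ (r,s)" by simp
qed (use msum_carrier[of n "\<lambda>a. mu n a a" n] in auto)

lemma msum_mult_vec_zero:
  assumes "\<And>a. a < k \<Longrightarrow> g a \<in> carrier_mat d d" "u \<in> carrier_vec d"
    "\<And>a. a < k \<Longrightarrow> g a *\<^sub>v u = 0\<^sub>v d"
  shows "msum d g k *\<^sub>v u = 0\<^sub>v d"
  using assms
proof (induction k)
  case (Suc k)
  have "msum d g k \<in> carrier_mat d d" by (rule msum_carrier) (use Suc in auto)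
  moreover have "g k \<in> carrier_mat d d" using Suc by auto
  ultimately have "msum d g (Suc k) *\<^sub>v u = msum d g k *\<^sub>v u + g k *\<^sub>v u"
    using Suc by (auto simp: add_mult_distrib_mat_vec)
  thus ?case using Suc by auto
qed auto

definition starrep :: "nat \<Rightarrow> nat \<Rightarrow> (complex mat \<Rightarrow> complex mat) \<Rightarrow> bool" where
  "starrep n m \<pi> \<longleftrightarrow>
     (\<forall>x\<in>carrier_mat n n. \<pi> x \<in> carrier_mat m m) \<and>
     (\<forall>x\<in>carrier_mat n n. \<forall>y\<in>carrier_mat n n. \<pi> (x + y) = \<pi> x + \<pi> y) \<and>
     (\<forall>c. \<forall>x\<in>carrier_mat n n. \<pi> (c \<cdot>\<^sub>m x) = c \<cdot>\<^sub>m \<pi> x) \<and>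
     (\<forall>x\<in>carrier_mat n n. \<forall>y\<in>carrier_mat n n. \<pi> (x * y) = \<pi> x * \<pi> y) \<and>
     (\<forall>x\<in>carrier_mat n n. \<pi> (cadj x) = cadj (\<pi> x))"

lemma starrepD:
  assumes "starrep n m \<pi>"
  shows "\<And>x. x \<in> carrier_mat n n \<Longrightarrow> \<pi> x \<in> carrier_mat m m"
    and "\<And>x y. x \<in> carrier_mat n n \<Longrightarrow> y \<in> carrier_mat n n \<Longrightarrow> \<pi> (x + y) = \<pi> x + \<pi> y"
    and "\<And>c x. x \<in> carrier_mat n n \<Longrightarrow> \<pi> (c \<cdot>\<^sub>m x) = c \<cdot>\<^sub>m \<pi> x"
    and "\<And>x y. x \<in> carrier_mat n n \<Longrightarrow> y \<in> carrier_mat n n \<Longrightarrow> \<pi> (x * y) = \<pi> x * \<pi> y"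
    and "\<And>x. x \<in> carrier_mat n n \<Longrightarrow> \<pi> (cadj x) = cadj (\<pi> x)"
  using assms unfolding starrep_def by auto

lemma starrep_zero:
  assumes "starrep n m \<pi>"
  shows "\<pi> (0\<^sub>m n n) = 0\<^sub>m m m"
proof -
  have "\<pi> (0\<^sub>m n n) = \<pi> (0 \<cdot>\<^sub>m 0\<^sub>m n n)" by simp
  also have "\<dots> = 0 \<cdot>\<^sub>m \<pi> (0\<^sub>m n n)" by (rule starrepD(3)[OF assms]) simp
  also have "\<dots> = 0\<^sub>m m m" using starrepD(1)[OF assms, of "0\<^sub>m n n"] by auto
  finally show ?thesis .
qed

lemma starrep_msum:
  assumes "starrep n m \<pi>" "\<And>a. a < k \<Longrightarrow> g a \<in> carrier_mat n n"
  shows "\<pi> (msum n g k) = msum m (\<lambda>a. \<pi> (g a)) k"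
  using assms(2)
proof (induction k)
  case 0 thus ?case using starrep_zero[OF assms(1)] by simp
next
  case (Suc k)
  have "msum n g k \<in> carrier_mat n n" by (rule msum_carrier) (use Suc in auto)
  thus ?case using Suc starrepD(2)[OF assms(1)] by auto
qed


lemma max_list_exists:
  assumes "P L0" "\<And>L. P L \<Longrightarrow> length L \<le> m"
  obtains L where "P L" "\<And>L'. P L' \<Longrightarrow> length L' \<le> length L"
proof -
  have "\<exists>x. P x \<and> (\<forall>y. P y \<longrightarrow> length y \<le> length x)"
    by (rule ex_has_greatest_nat[of P L0 length "Suc m"]) (use assms in \<open>auto simp: less_Suc_eq_le\<close>)
  thus ?thesis using that by blast
qed

lemma ip_adj':
  assumes A: "A \<in> carrier_mat m k" and v: "v \<in> carrier_vec m" and w: "w \<in> carrier_vec k"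
  shows "ip v (A *\<^sub>v w) = ip (cadj A *\<^sub>v v) w"
  using ip_adj[OF cadj_carrier[OF A] v w] by simp

lemma vec_minus_zero_eq:
  fixes u v :: "complex vec"
  assumes "u \<in> carrier_vec m" "v \<in> carrier_vec m" "u - v = 0\<^sub>v m"
  shows "u = v"
proof (rule eq_vecI)
  fix i assume i: "i < dim_vec v"
  have "u $ i - v $ i = 0" using arg_cong[OF assms(3), of "\<lambda>w. w $ i"] i assms(1,2) by simp
  thus "u $ i = v $ i" by simp
qed (use assms in auto)

lemma colsmat_conj_entry:
  assumes L: "set L \<subseteq> carrier_vec m" "length L = m" and A: "A \<in> carrier_mat m m"
    and st: "s < m" "t < m"
  shows "(cadj (colsmat m L) * A * colsmat m L) $$ (s,t) = ip (A *\<^sub>v (L!t)) (L!s)"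
proof -
  let ?U = "colsmat m L"
  have Lt: "L!t \<in> carrier_vec m" "L!s \<in> carrier_vec m" using L st by auto
  have colU: "col ?U t = L!t" using st Lt by (auto simp: colsmat_def)
  have "cadj ?U * A * ?U = cadj ?U * (A * ?U)"
    by (rule assoc_mult_mat[of _ m m _ m _ m]) (use A in auto)
  hence "(cadj ?U * A * ?U) $$ (s,t) = row (cadj ?U) s \<bullet> col (A * ?U) t"
    using st A by auto
  also have "col (A * ?U) t = A *\<^sub>v L!t" using A st colU by (auto simp del: col_mult2 simp: col_mult2[of A m m ?U m t])
  also have "row (cadj ?U) s = vec m (\<lambda>r. cnj (L!s $ r))" using st by (auto simp: cadj_def colsmat_def)
  also have "vec m (\<lambda>r. cnj (L!s $ r)) \<bullet> (A *\<^sub>v L!t) = ip (A *\<^sub>v (L!t)) (L!s)"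
    using A Lt by (auto simp: scalar_prod_def ip_def lessThan_atLeast0 mult.commute intro!: sum.cong)
  finally show ?thesis .
qed

lemma rep_carrier: "starrep n m \<pi> \<Longrightarrow> x \<in> carrier_mat n n \<Longrightarrow> \<pi> x \<in> carrier_mat m m"
  using starrepD(1) by blast

lemma rep_f_mult:
  assumes R: "starrep n m \<pi>" and "b < n" "c < n"
  shows "\<pi> (mu n a b) * \<pi> (mu n c d) = (if b = c then \<pi> (mu n a d) else 0\<^sub>m m m)"
proof -
  have "\<pi> (mu n a b) * \<pi> (mu n c d) = \<pi> (mu n a b * mu n c d)"
    using starrepD(4)[OF R, of "mu n a b" "mu n c d"] by simp
  also have "\<dots> = (if b = c then \<pi> (mu n a d) else 0\<^sub>m m m)"
    using mu_mult[OF assms(2,3), of a d] starrep_zero[OF R] by simp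
  finally show ?thesis .
qed

lemma rep_f_adj:
  assumes R: "starrep n m \<pi>"
  shows "cadj (\<pi> (mu n a b)) = \<pi> (mu n b a)"
  using starrepD(5)[OF R, of "mu n a b"] by (simp add: cadj_mu)

lemma rep_one_right:
  assumes R: "starrep n m \<pi>" and x: "x \<in> carrier_mat n n"
  shows "\<pi> x * \<pi> (1\<^sub>m n) = \<pi> x"
  using starrepD(4)[OF R x, of "1\<^sub>m n"] x by simp

lemma rep_one_left:
  assumes R: "starrep n m \<pi>" and x: "x \<in> carrier_mat n n"
  shows "\<pi> (1\<^sub>m n) * \<pi> x = \<pi> x"
  using starrepD(4)[OF R _ x, of "1\<^sub>m n"] x by simp

lemma rep_one_adj:
  assumes R: "starrep n m \<pi>"
  shows "cadj (\<pi> (1\<^sub>m n)) = \<pi> (1\<^sub>m n)"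
  using starrepD(5)[OF R, of "1\<^sub>m n"] by simp

lemma rep_sandwich:
  assumes R: "starrep n m \<pi>" and x: "x \<in> carrier_mat n n" and a: "a < n" and b: "b < n" and n: "0 < n"
  shows "\<pi> (mu n 0 b) * \<pi> x * \<pi> (mu n a 0) = x $$ (b,a) \<cdot>\<^sub>m \<pi> (mu n 0 0)"
proof -
  have "\<pi> (mu n 0 b) * \<pi> x * \<pi> (mu n a 0) = \<pi> (mu n 0 b * x) * \<pi> (mu n a 0)"
    using starrepD(4)[OF R, of "mu n 0 b" x] x by simp
  also have "\<dots> = \<pi> (mu n 0 b * x * mu n a 0)"
    using starrepD(4)[OF R, of "mu n 0 b * x" "mu n a 0"] mult_carrier_mat[OF mu_carrier x] by simp
  also have "\<dots> = \<pi> (x $$ (b,a) \<cdot>\<^sub>m mu n 0 0)" using mu_sandwich[OF x a b n] by simp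
  also have "\<dots> = x $$ (b,a) \<cdot>\<^sub>m \<pi> (mu n 0 0)" using starrepD(3)[OF R] by simp
  finally show ?thesis .
qed

lemma rep_one_msum:
  assumes R: "starrep n m \<pi>"
  shows "\<pi> (1\<^sub>m n) = msum m (\<lambda>a. \<pi> (mu n a a)) n"
  using starrep_msum[OF R, of n "\<lambda>a. mu n a a"] one_msum[of n] by simp


lemma smult_vec_zero'[simp]: "(c::complex) \<cdot>\<^sub>v 0\<^sub>v m = 0\<^sub>v m"
  by (rule eq_vecI) auto

lemma zero_mat_mult_vec'[simp]: "(v::complex vec) \<in> carrier_vec k \<Longrightarrow> 0\<^sub>m m k *\<^sub>v v = 0\<^sub>v m"
  by (rule eq_vecI) (auto simp: scalar_prod_def)

lemma mat_mult_zero_vec'[simp]: "(A::complex mat) \<in> carrier_mat m k \<Longrightarrow> A *\<^sub>v 0\<^sub>v k = 0\<^sub>v m"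
  by (rule eq_vecI) (auto simp: scalar_prod_def)

lemma mult3_vec:
  assumes "A \<in> carrier_mat m m" "B \<in> carrier_mat m m" "C \<in> carrier_mat m m" "w \<in> carrier_vec m"
  shows "(A * B * C) *\<^sub>v w = A *\<^sub>v (B *\<^sub>v (C *\<^sub>v w))"
proof -
  have "(A * B * C) *\<^sub>v w = (A * B) *\<^sub>v (C *\<^sub>v w)"
    by (rule assoc_mult_mat_vec[of "A*B" m m C m w]) (use assms in auto)
  also have "\<dots> = A *\<^sub>v (B *\<^sub>v (C *\<^sub>v w))"
    by (rule assoc_mult_mat_vec[of A m m B m]) (use assms in auto)
  finally show ?thesis .
qed

lemma smult_mat_vec':
  assumes A: "(A::complex mat) \<in> carrier_mat m k" and w: "w \<in> carrier_vec k"
  shows "(c \<cdot>\<^sub>m A) *\<^sub>v w = c \<cdot>\<^sub>v (A *\<^sub>v w)"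
proof (rule eq_vecI)
  fix i assume i: "i < dim_vec (c \<cdot>\<^sub>v (A *\<^sub>v w))"
  hence i': "i < m" using A by simp
  have "((c \<cdot>\<^sub>m A) *\<^sub>v w) $ i = (\<Sum>j<k. (c \<cdot>\<^sub>m A) $$ (i,j) * w $ j)"
    by (rule mv_index[OF _ w i']) (use A in simp)
  also have "\<dots> = c * (\<Sum>j<k. A $$ (i,j) * w $ j)"
    using A i' by (auto simp: sum_distrib_left mult.assoc intro!: sum.cong)
  also have "\<dots> = (c \<cdot>\<^sub>v (A *\<^sub>v w)) $ i" using mv_index[OF A w i'] i' A by simp
  finally show "((c \<cdot>\<^sub>m A) *\<^sub>v w) $ i = (c \<cdot>\<^sub>v (A *\<^sub>v w)) $ i" .
qed (use A in simp)

lemma regroup: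
  assumes "U \<in> carrier_mat m m" "V \<in> carrier_mat m m" "A \<in> carrier_mat m m"
  shows "U * (V * A * U) * V = (U * V) * A * (U * V)"
proof -
  have 1: "U * (V * A * U) * V = U * ((V * A * U) * V)"
    by (rule assoc_mult_mat[of U m m "V*A*U" m V m]) (use assms in auto)
  have 2: "(V * A * U) * V = (V * A) * (U * V)"
    by (rule assoc_mult_mat[of "V*A" m m U m V m]) (use assms in auto)
  have 3: "U * ((V * A) * (U * V)) = (U * (V * A)) * (U * V)"
    by (rule assoc_mult_mat[of U m m "V*A" m "U*V" m, symmetric]) (use assms in auto)
  have 4: "U * (V * A) = U * V * A"
    by (rule assoc_mult_mat[of U m m V m A m, symmetric]) (use assms in auto)
  show ?thesis using 1 2 3 4 by simp
qed

lemma divmod_facts: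
  assumes "t < n * (E::nat)"
  shows "t div E < n" "t mod E < E" "0 < E"
proof -
  show "0 < E" using assms by (cases "E = 0") auto
  thus "t mod E < E" by simp
  show "t div E < n" using assms by (simp add: less_mult_imp_div_less)
qed

lemma divmod_eq_iff: "(s::nat) = t \<longleftrightarrow> s div E = t div E \<and> s mod E = t mod E"
  by (metis div_mult_mod_eq)

theorem rep_structure:
  assumes R: "starrep n m \<pi>" and n: "0 < n"
  shows "\<exists>E U. n * E \<le> m \<and> unitary_mat m U \<and>
           (\<forall>x\<in>carrier_mat n n. \<pi> x = U * tensor_pad n E m x * cadj U)"
proof -
  define F where "F = \<pi> (mu n 0 0)"
  have fc: "\<And>a b. \<pi> (mu n a b) \<in> carrier_mat m m" using rep_carrier[OF R mu_carrier] .
  have F: "F \<in> carrier_mat m m" using fc F_def by simp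
  define P where "P = \<pi> (1\<^sub>m n)"
  have Pc: "P \<in> carrier_mat m m" using rep_carrier[OF R one_carrier_mat] P_def by simp
  have PP: "P * P = P" unfolding P_def using rep_one_left[OF R one_carrier_mat] .
  have Padj: "cadj P = P" unfolding P_def by (rule rep_one_adj[OF R])
  define SW where "SW = {L. orthonormal m L \<and> (\<forall>w\<in>set L. F *\<^sub>v w = w)}"
  have h1: "[] \<in> SW" unfolding SW_def orthonormal_def by simp
  have h2: "\<And>L. L \<in> SW \<Longrightarrow> length L \<le> m" unfolding SW_def using orthonormal_length by blast
  obtain W where W: "W \<in> SW" and Wmaxlen: "\<And>L'. L' \<in> SW \<Longrightarrow> length L' \<le> length W"
    using max_list_exists[of "\<lambda>L. L \<in> SW" "[]" m, OF h1 h2] by blast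
  have Wo: "orthonormal m W" and WF: "\<And>w. w \<in> set W \<Longrightarrow> F *\<^sub>v w = w" using W unfolding SW_def by auto
  have Wset: "set W \<subseteq> carrier_vec m" using Wo unfolding orthonormal_def by auto
  define E where "E = length W"
  have Wc: "\<And>k. k < E \<Longrightarrow> W!k \<in> carrier_vec m" using Wset unfolding E_def by auto
  have Wip: "\<And>k l. k < E \<Longrightarrow> l < E \<Longrightarrow> ip (W!k) (W!l) = (if k = l then 1 else 0)"
    using Wo unfolding orthonormal_def E_def by auto
  have WFk: "\<And>k. k < E \<Longrightarrow> F *\<^sub>v (W!k) = W!k" using WF unfolding E_def by auto
  have Wmax: "y = 0\<^sub>v m" if y: "y \<in> carrier_vec m" "F *\<^sub>v y = y" "\<forall>w\<in>set W. ip y w = 0" for y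
  proof (rule ccontr)
    assume ny: "y \<noteq> 0\<^sub>v m"
    obtain c where c: "c \<noteq> 0" "ip (c \<cdot>\<^sub>v y) (c \<cdot>\<^sub>v y) = 1" using normalize_vec[OF y(1) ny] by blast
    have perp: "\<forall>l\<in>set W. ip l (c \<cdot>\<^sub>v y) = 0"
    proof
      fix l assume l: "l \<in> set W"
      have lc: "l \<in> carrier_vec m" using l Wset by auto
      have "ip l (c \<cdot>\<^sub>v y) = cnj c * ip l y" by (rule ip_smult_right[OF lc y(1)])
      also have "ip l y = cnj (ip y l)" by (rule ip_sym[OF y(1) lc])
      finally show "ip l (c \<cdot>\<^sub>v y) = 0" using y(3) l by simp
    qed
    have "orthonormal m (W @ [c \<cdot>\<^sub>v y])"
      by (rule orthonormal_snoc[OF Wo]) (use y c perp in auto)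
    moreover have "F *\<^sub>v (c \<cdot>\<^sub>v y) = c \<cdot>\<^sub>v y" using mult_mat_vec[OF F y(1)] y(2) by simp
    ultimately have "W @ [c \<cdot>\<^sub>v y] \<in> SW" using WF unfolding SW_def by auto
    from Wmaxlen[OF this] show False by simp
  qed
  define cv where "cv t = \<pi> (mu n (t div E) 0) *\<^sub>v (W ! (t mod E))" for t
  define C where "C = map cv [0..<n*E]"
  have cvc: "cv t \<in> carrier_vec m" if t: "t < n*E" for t
    using divmod_facts[OF t] Wc fc unfolding cv_def by (meson mult_mat_vec_carrier)
  have cvip: "ip (cv s) (cv t) = (if s = t then 1 else 0)" if s: "s < n*E" and t: "t < n*E" for s t
  proof -
    define a where "a = s div E"
    define k where "k = s mod E"
    define b where "b = t div E"
    define l where "l = t mod E"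
    have ab: "a < n" "b < n" "k < E" "l < E" using divmod_facts[OF s] divmod_facts[OF t]
      unfolding a_def b_def k_def l_def by auto
    have "ip (cv s) (cv t) = ip (\<pi> (mu n a 0) *\<^sub>v W!k) (\<pi> (mu n b 0) *\<^sub>v W!l)"
      unfolding cv_def a_def b_def k_def l_def ..
    also have "\<dots> = ip (W!k) (cadj (\<pi> (mu n a 0)) *\<^sub>v (\<pi> (mu n b 0) *\<^sub>v W!l))"
      by (rule ip_adj[OF fc[of a 0] Wc[OF ab(3)]]) (meson fc Wc ab mult_mat_vec_carrier)
    also have "\<dots> = ip (W!k) ((\<pi> (mu n 0 a) * \<pi> (mu n b 0)) *\<^sub>v W!l)"
      using rep_f_adj[OF R] fc Wc[OF ab(4)] by (simp add: assoc_mult_mat_vec[of _ m m _ m])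
    also have "\<dots> = (if a = b \<and> k = l then 1 else 0)"
    proof (cases "a = b")
      case True
      hence "\<pi> (mu n 0 a) * \<pi> (mu n b 0) = F" using rep_f_mult[OF R ab(1) ab(2)] unfolding F_def by simp
      thus ?thesis using True WFk[OF ab(4)] Wip[OF ab(3,4)] by simp
    next
      case False
      hence "\<pi> (mu n 0 a) * \<pi> (mu n b 0) = 0\<^sub>m m m" using rep_f_mult[OF R ab(1) ab(2)] by simp
      thus ?thesis using False Wc[OF ab(4)] Wc[OF ab(3)] by simp
    qed
    also have "\<dots> = (if s = t then 1 else 0)"
      using divmod_eq_iff[of s t E] unfolding a_def b_def k_def l_def by simp
    finally show ?thesis .
  qed
  have lenC: "length C = n * E" unfolding C_def by simp
  have Cnth: "\<And>t. t < n * E \<Longrightarrow> C!t = cv t" unfolding C_def by simp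
  have Co: "orthonormal m C"
    unfolding orthonormal_def using cvc cvip by (auto simp: lenC Cnth simp del: length_map) (auto simp: C_def)
  have PC: "P *\<^sub>v cv t = cv t" if t: "t < n*E" for t
  proof -
    have "P *\<^sub>v cv t = (P * \<pi> (mu n (t div E) 0)) *\<^sub>v (W ! (t mod E))"
      unfolding cv_def using Pc fc Wc[OF divmod_facts(2)[OF t]] by (simp add: assoc_mult_mat_vec[of _ m m _ m])
    also have "P * \<pi> (mu n (t div E) 0) = \<pi> (mu n (t div E) 0)"
      unfolding P_def by (rule rep_one_left[OF R mu_carrier])
    finally show ?thesis unfolding cv_def .
  qed
  define SZ where "SZ = {Z. orthonormal m (C @ Z) \<and> (\<forall>z\<in>set Z. P *\<^sub>v z = 0\<^sub>v m)}"
  have z1: "[] \<in> SZ" unfolding SZ_def using Co by simp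
  have z2: "\<And>Z. Z \<in> SZ \<Longrightarrow> length Z \<le> m" unfolding SZ_def using orthonormal_length by fastforce
  obtain Z where Z: "Z \<in> SZ" and Zmaxlen: "\<And>L'. L' \<in> SZ \<Longrightarrow> length L' \<le> length Z"
    using max_list_exists[of "\<lambda>L. L \<in> SZ" "[]" m, OF z1 z2] by blast
  define L where "L = C @ Z"
  have Lo: "orthonormal m L" and PZ: "\<And>z. z \<in> set Z \<Longrightarrow> P *\<^sub>v z = 0\<^sub>v m"
    using Z unfolding SZ_def L_def by auto
  have Lc: "set L \<subseteq> carrier_vec m" using Lo unfolding orthonormal_def by auto
  have setC: "\<And>l. l \<in> set C \<Longrightarrow> \<exists>t < n*E. l = cv t" unfolding C_def by auto
  have lenL: "length L = m"
  proof (rule ccontr)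
    assume "length L \<noteq> m"
    hence lt: "length L < m" using orthonormal_length[OF Lo] by simp
    obtain u where u: "u \<in> carrier_vec m" "u \<noteq> 0\<^sub>v m" "\<forall>l\<in>set L. ip u l = 0"
      using exists_perp[OF Lc lt] by blast
    define y where "y = u - P *\<^sub>v u"
    have Pu: "P *\<^sub>v u \<in> carrier_vec m" using Pc u by simp
    have yc: "y \<in> carrier_vec m" unfolding y_def using u Pu by simp
    have Py: "P *\<^sub>v y = 0\<^sub>v m"
    proof -
      have "P *\<^sub>v y = P *\<^sub>v u - P *\<^sub>v (P *\<^sub>v u)" unfolding y_def
        using mult_minus_distrib_mat_vec[OF Pc u(1) Pu] .
      also have "P *\<^sub>v (P *\<^sub>v u) = P *\<^sub>v u" using assoc_mult_mat_vec[OF Pc Pc u(1)] PP by simp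
      finally show ?thesis using Pu by simp
    qed
    have yperp: "ip y l = 0" if l: "l \<in> set L" for l
    proof -
      have lc: "l \<in> carrier_vec m" using l Lc by auto
      have "ip y l = ip u l - ip (P *\<^sub>v u) l" unfolding y_def by (rule ip_minus_left[OF u(1) Pu])
      also have "ip (P *\<^sub>v u) l = ip u (P *\<^sub>v l)" using ip_adj[OF Pc u(1) lc] Padj by simp
      also have "ip u (P *\<^sub>v l) = 0"
      proof (cases "l \<in> set C")
        case True
        then obtain t where "t < n*E" "l = cv t" using setC by blast
        thus ?thesis using PC u(3) l by simp
      next
        case False
        hence "l \<in> set Z" using l unfolding L_def by simp
        thus ?thesis using PZ u by simp
      qed
      finally show ?thesis using u(3) l by simp
    qed
    show False
    proof (cases "y = 0\<^sub>v m")
      case False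
      obtain c where c: "c \<noteq> 0" "ip (c \<cdot>\<^sub>v y) (c \<cdot>\<^sub>v y) = 1" using normalize_vec[OF yc False] by blast
      have perp: "\<forall>l\<in>set L. ip l (c \<cdot>\<^sub>v y) = 0"
      proof
        fix l assume l: "l \<in> set L"
        have lc: "l \<in> carrier_vec m" using l Lc by auto
        have "ip l (c \<cdot>\<^sub>v y) = cnj c * ip l y" by (rule ip_smult_right[OF lc yc])
        also have "ip l y = cnj (ip y l)" by (rule ip_sym[OF yc lc])
        finally show "ip l (c \<cdot>\<^sub>v y) = 0" using yperp l by simp
      qed
      have "orthonormal m (L @ [c \<cdot>\<^sub>v y])"
        by (rule orthonormal_snoc[OF Lo]) (use yc c perp in auto)
      moreover have "P *\<^sub>v (c \<cdot>\<^sub>v y) = 0\<^sub>v m" using mult_mat_vec[OF Pc yc] Py by simp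
      ultimately have "Z @ [c \<cdot>\<^sub>v y] \<in> SZ" using PZ unfolding SZ_def L_def by auto
      from Zmaxlen[OF this] show False by simp
    next
      case True
      hence uP: "u = P *\<^sub>v u" using vec_minus_zero_eq[OF u(1) Pu] unfolding y_def by simp
      have faa: "\<pi> (mu n a a) *\<^sub>v u = 0\<^sub>v m" if a: "a < n" for a
      proof -
        define g where "g = \<pi> (mu n 0 a) *\<^sub>v u"
        have gc: "g \<in> carrier_vec m" unfolding g_def using fc u by (meson mult_mat_vec_carrier)
        have Fg: "F *\<^sub>v g = g"
        proof -
          have "F *\<^sub>v g = (F * \<pi> (mu n 0 a)) *\<^sub>v u" unfolding g_def
            using F fc u by (simp add: assoc_mult_mat_vec[of _ m m _ m])
          also have "F * \<pi> (mu n 0 a) = \<pi> (mu n 0 a)" unfolding F_def using rep_f_mult[OF R n n] by simp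
          finally show ?thesis unfolding g_def .
        qed
        have gperp: "\<forall>w\<in>set W. ip g w = 0"
        proof
          fix w assume w: "w \<in> set W"
          then obtain k where k: "k < E" "w = W!k" unfolding E_def by (auto simp: in_set_conv_nth)
          have t: "a * E + k < n * E"
          proof -
            have "a * E + k < (a + 1) * E" using k by simp
            also have "\<dots> \<le> n * E" using a by (intro mult_right_mono) auto
            finally show ?thesis .
          qed
          have cvt: "cv (a * E + k) = \<pi> (mu n a 0) *\<^sub>v W!k" unfolding cv_def using k by simp
          have "ip g w = ip u (cadj (\<pi> (mu n 0 a)) *\<^sub>v W!k)" unfolding g_def k(2)
            by (rule ip_adj[OF fc u(1) Wc[OF k(1)]])
          also have "\<dots> = ip u (cv (a * E + k))" using rep_f_adj[OF R] cvt by simp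
          also have "\<dots> = 0" using u(3) t unfolding L_def C_def by auto
          finally show "ip g w = 0" .
        qed
        have g0: "g = 0\<^sub>v m" by (rule Wmax[OF gc Fg gperp])
        have "\<pi> (mu n a a) *\<^sub>v u = (\<pi> (mu n a 0) * \<pi> (mu n 0 a)) *\<^sub>v u"
          using rep_f_mult[OF R n n, of a a] by simp
        also have "\<dots> = \<pi> (mu n a 0) *\<^sub>v g" unfolding g_def using fc u by (simp add: assoc_mult_mat_vec[of _ m m _ m])
        also have "\<dots> = 0\<^sub>v m" using g0 fc[of a 0] by auto
        finally show ?thesis .
      qed
      have "P *\<^sub>v u = 0\<^sub>v m" unfolding P_def rep_one_msum[OF R]
        by (rule msum_mult_vec_zero) (use fc u faa in auto)
      thus False using uP u(2) by simp
    qed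
  qed
  define U where "U = colsmat m L"
  have Uu: "unitary_mat m U" unfolding U_def by (rule colsmat_unitary[OF Lo lenL])
  have Uc: "U \<in> carrier_mat m m" unfolding U_def by simp
  have nEm: "n * E \<le> m" using lenL lenC unfolding L_def by simp
  have LC: "\<And>t. t < n * E \<Longrightarrow> L!t = cv t" unfolding L_def using lenC Cnth by (simp add: nth_append)
  have LZ: "\<And>t. n * E \<le> t \<Longrightarrow> t < m \<Longrightarrow> L!t \<in> set Z"
    unfolding L_def using lenC lenL unfolding L_def by (simp add: nth_append)
  have Zc: "\<And>z. z \<in> set Z \<Longrightarrow> z \<in> carrier_vec m" using Lc unfolding L_def by auto
  have Pzero: "\<pi> x *\<^sub>v z = 0\<^sub>v m" if x: "x \<in> carrier_mat n n" and z: "z \<in> set Z" for x z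
  proof -
    have "\<pi> x *\<^sub>v z = (\<pi> x * P) *\<^sub>v z" unfolding P_def using rep_one_right[OF R x] by simp
    also have "\<dots> = \<pi> x *\<^sub>v (P *\<^sub>v z)" using rep_carrier[OF R x] Pc Zc[OF z]
      by (simp add: assoc_mult_mat_vec[of _ m m _ m])
    also have "\<dots> = 0\<^sub>v m" using PZ[OF z] rep_carrier[OF R x] by simp
    finally show ?thesis .
  qed
  have main: "cadj U * \<pi> x * U = tensor_pad n E m x" if x: "x \<in> carrier_mat n n" for x
  proof (rule eq_matI)
    fix s t assume "s < dim_row (tensor_pad n E m x)" "t < dim_col (tensor_pad n E m x)"
    hence st: "s < m" "t < m" by (auto simp: tensor_pad_def)
    have pix: "\<pi> x \<in> carrier_mat m m" using rep_carrier[OF R x] .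
    have "(cadj U * \<pi> x * U) $$ (s,t) = ip (\<pi> x *\<^sub>v (L!t)) (L!s)"
      unfolding U_def by (rule colsmat_conj_entry[OF Lc lenL pix st])
    also have "\<dots> = tensor_pad n E m x $$ (s,t)"
    proof (cases "t < n * E")
      case False
      hence "\<pi> x *\<^sub>v (L!t) = 0\<^sub>v m" using Pzero[OF x LZ] st by simp
      thus ?thesis using False st by (simp add: tensor_pad_def)
    next
      case tt: True
      show ?thesis
      proof (cases "s < n * E")
        case False
        have cx: "cadj x \<in> carrier_mat n n" using x by simp
        have "ip (\<pi> x *\<^sub>v (L!t)) (L!s) = ip (L!t) (cadj (\<pi> x) *\<^sub>v L!s)"
          using ip_adj[OF pix _ _] Lc st lenL by (simp add: subset_code(1))
        also have "cadj (\<pi> x) = \<pi> (cadj x)" using starrepD(5)[OF R x] by simp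
        also have "\<pi> (cadj x) *\<^sub>v L!s = 0\<^sub>v m" using Pzero[OF cx LZ] False st by simp
        finally show ?thesis using False st Lc lenL by (simp add: tensor_pad_def subset_code(1))
      next
        case ss: True
        define a where "a = t div E"
        define k where "k = t mod E"
        define b where "b = s div E"
        define l where "l = s mod E"
        have ab: "a < n" "b < n" "k < E" "l < E" using divmod_facts[OF ss] divmod_facts[OF tt]
          unfolding a_def b_def k_def l_def by auto
        have Wk: "W!k \<in> carrier_vec m" and Wl: "W!l \<in> carrier_vec m" using Wc ab by auto
        have "ip (\<pi> x *\<^sub>v (L!t)) (L!s) = ip (\<pi> x *\<^sub>v (\<pi> (mu n a 0) *\<^sub>v W!k)) (\<pi> (mu n b 0) *\<^sub>v W!l)"
          using LC tt ss unfolding cv_def a_def b_def k_def l_def by simp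
        also have "\<dots> = ip (cadj (\<pi> (mu n b 0)) *\<^sub>v (\<pi> x *\<^sub>v (\<pi> (mu n a 0) *\<^sub>v W!k))) (W!l)"
          by (rule ip_adj'[OF fc _ Wl]) (meson pix fc Wk mult_mat_vec_carrier)
        also have "cadj (\<pi> (mu n b 0)) *\<^sub>v (\<pi> x *\<^sub>v (\<pi> (mu n a 0) *\<^sub>v W!k))
            = (\<pi> (mu n 0 b) * \<pi> x * \<pi> (mu n a 0)) *\<^sub>v W!k"
          using rep_f_adj[OF R] mult3_vec[OF fc pix fc Wk] by simp
        also have "\<pi> (mu n 0 b) * \<pi> x * \<pi> (mu n a 0) = x $$ (b,a) \<cdot>\<^sub>m F"
          unfolding F_def by (rule rep_sandwich[OF R x ab(1) ab(2) n])
        also have "(x $$ (b,a) \<cdot>\<^sub>m F) *\<^sub>v W!k = x $$ (b,a) \<cdot>\<^sub>v (F *\<^sub>v W!k)"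
          by (rule smult_mat_vec'[OF F Wk])
        also have "F *\<^sub>v W!k = W!k" using WFk ab by simp
        also have "ip (x $$ (b,a) \<cdot>\<^sub>v W!k) (W!l) = x $$ (b,a) * (if k = l then 1 else 0)"
          using ip_smult_left Wip ab by simp
        also have "\<dots> = tensor_pad n E m x $$ (s,t)"
          using st ss tt unfolding tensor_pad_def a_def b_def k_def l_def by auto
        finally show ?thesis .
      qed
    qed
    finally show "(cadj U * \<pi> x * U) $$ (s,t) = tensor_pad n E m x $$ (s,t)" .
  qed (auto simp: tensor_pad_def U_def)
  have rep: "\<pi> x = U * tensor_pad n E m x * cadj U" if x: "x \<in> carrier_mat n n" for x
  proof -
    have pix: "\<pi> x \<in> carrier_mat m m" using rep_carrier[OF R x] .
    have "U * tensor_pad n E m x * cadj U = U * (cadj U * \<pi> x * U) * cadj U" using main[OF x] by simp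
    also have "\<dots> = (U * cadj U) * \<pi> x * (U * cadj U)" by (rule regroup[OF Uc _ pix]) (use Uc in simp)
    also have "\<dots> = \<pi> x" using Uu pix unfolding unitary_mat_def by simp
    finally show ?thesis by simp
  qed
  show ?thesis using nEm Uu rep by blast
qed


lemma binc_length[simp]: "length (binc ls i x) = length ls"
  by (simp add: binc_def)

lemma binc_nth: "k < length ls \<Longrightarrow> binc ls i x ! k = (if k = i then x else 0\<^sub>m (ls!k) (ls!k))"
  by (simp add: binc_def)

lemma bzero_length[simp]: "length (bzero ls) = length ls" by (simp add: bzero_def)
lemma bzero_nth: "k < length ls \<Longrightarrow> bzero ls ! k = 0\<^sub>m (ls!k) (ls!k)" by (simp add: bzero_def)

lemma bcarrier_nth: "xs \<in> bcarrier ls \<Longrightarrow> k < length ls \<Longrightarrow> xs ! k \<in> carrier_mat (ls!k) (ls!k)"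
  by (simp add: bcarrier_def)

lemma bcarrier_length: "xs \<in> bcarrier ls \<Longrightarrow> length xs = length ls"
  by (simp add: bcarrier_def)

lemma binc_carrier: "i < length ls \<Longrightarrow> x \<in> carrier_mat (ls!i) (ls!i) \<Longrightarrow> binc ls i x \<in> bcarrier ls"
  by (auto simp: bcarrier_def binc_nth)

lemma binc_add:
  assumes "i < length ls" "x \<in> carrier_mat (ls!i) (ls!i)" "y \<in> carrier_mat (ls!i) (ls!i)"
  shows "badd (binc ls i x) (binc ls i y) = binc ls i (x + y)"
  by (rule nth_equalityI) (use assms in \<open>auto simp: badd_def binc_nth\<close>)

lemma binc_smult:
  shows "bsmult c (binc ls i x) = binc ls i (c \<cdot>\<^sub>m x)"
  by (rule nth_equalityI) (auto simp: bsmult_def binc_nth)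

lemma binc_mult:
  assumes "i < length ls" "x \<in> carrier_mat (ls!i) (ls!i)" "y \<in> carrier_mat (ls!i) (ls!i)"
  shows "bmult (binc ls i x) (binc ls i y) = binc ls i (x * y)"
  by (rule nth_equalityI) (use assms in \<open>auto simp: bmult_def binc_nth\<close>)

lemma binc_adj:
  shows "badj (binc ls i x) = binc ls i (cadj x)"
  by (rule nth_equalityI) (auto simp: badj_def binc_nth)


lemma starrep_from_hom:
  assumes H: "star_hom ns ms \<phi>" and i: "i < length ns" and j: "j < length ms"
  shows "starrep (ns!i) (ms!j) (\<lambda>x. \<phi> (binc ns i x) ! j)"
proof -
  have c: "\<phi> (binc ns i x) \<in> bcarrier ms" if "x \<in> carrier_mat (ns!i) (ns!i)" for x
    using H binc_carrier[OF i that] unfolding star_hom_def by blast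
  have len: "length (\<phi> (binc ns i x)) = length ms" if "x \<in> carrier_mat (ns!i) (ns!i)" for x
    using c[OF that] bcarrier_length by blast
  show ?thesis unfolding starrep_def
  proof (intro conjI ballI allI)
    fix x :: "complex mat" assume x: "x \<in> carrier_mat (ns!i) (ns!i)"
    show "\<phi> (binc ns i x) ! j \<in> carrier_mat (ms!j) (ms!j)" using bcarrier_nth[OF c[OF x] j] .
    show "\<phi> (binc ns i (cadj x)) ! j = cadj (\<phi> (binc ns i x) ! j)"
      using H binc_carrier[OF i x] len[OF x] j unfolding star_hom_def
      by (auto simp flip: binc_adj simp: badj_def)
  next
    fix x y :: "complex mat" assume x: "x \<in> carrier_mat (ns!i) (ns!i)" and y: "y \<in> carrier_mat (ns!i) (ns!i)"
    have "\<phi> (binc ns i (x + y)) = badd (\<phi> (binc ns i x)) (\<phi> (binc ns i y))"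
      using H binc_carrier[OF i x] binc_carrier[OF i y] binc_add[OF i x y] unfolding star_hom_def by metis
    thus "\<phi> (binc ns i (x + y)) ! j = \<phi> (binc ns i x) ! j + \<phi> (binc ns i y) ! j"
      using len[OF x] len[OF y] j by (simp add: badd_def)
    have "\<phi> (binc ns i (x * y)) = bmult (\<phi> (binc ns i x)) (\<phi> (binc ns i y))"
      using H binc_carrier[OF i x] binc_carrier[OF i y] binc_mult[OF i x y] unfolding star_hom_def by metis
    thus "\<phi> (binc ns i (x * y)) ! j = \<phi> (binc ns i x) ! j * \<phi> (binc ns i y) ! j"
      using len[OF x] len[OF y] j by (simp add: bmult_def)
  next
    fix c and x :: "complex mat" assume x: "x \<in> carrier_mat (ns!i) (ns!i)"
    have "\<phi> (binc ns i (c \<cdot>\<^sub>m x)) = bsmult c (\<phi> (binc ns i x))"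
      using H binc_carrier[OF i x] binc_smult unfolding star_hom_def by metis
    thus "\<phi> (binc ns i (c \<cdot>\<^sub>m x)) ! j = c \<cdot>\<^sub>m \<phi> (binc ns i x) ! j"
      using len[OF x] j by (simp add: bsmult_def)
  qed
qed

lemma min_proj_mu:
  assumes j: "j < length ls" and pos: "0 < ls!j"
  shows "min_proj ls (binc ls j (mu (ls!j) 0 0))"
proof -
  let ?N = "ls!j"
  let ?p = "binc ls j (mu ?N 0 0)"
  have pc: "?p \<in> bcarrier ls" using binc_carrier[OF j] by simp
  have pp: "bmult ?p ?p = ?p" using binc_mult[OF j mu_carrier mu_carrier] mu_mult[OF pos pos] by simp
  have pa: "badj ?p = ?p" using binc_adj cadj_mu by metis
  have proj: "is_proj ls ?p" unfolding is_proj_def using pc pp pa by simp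
  have nz: "?p \<noteq> bzero ls"
  proof
    assume "?p = bzero ls"
    hence "?p ! j = bzero ls ! j" by simp
    hence "mu ?N 0 0 = 0\<^sub>m ?N ?N" using j by (simp add: binc_nth bzero_nth)
    hence "mu ?N 0 0 $$ (0,0) = 0\<^sub>m ?N ?N $$ (0,0)" by simp
    thus False using pos by (simp add: mu_def)
  qed
  have minim: "q = bzero ls \<or> q = ?p" if q: "is_proj ls q" "bmult q ?p = q" for q
  proof -
    have qc: "q \<in> bcarrier ls" and qq: "bmult q q = q" and qa: "badj q = q" using q unfolding is_proj_def by auto
    have lq: "length q = length ls" using bcarrier_length[OF qc] .
    have other: "q ! k = 0\<^sub>m (ls!k) (ls!k)" if k: "k < length ls" "k \<noteq> j" for k
    proof -
      have "q ! k = (bmult q ?p) ! k" using q(2) by simp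
      also have "\<dots> = q ! k * 0\<^sub>m (ls!k) (ls!k)" using k lq by (simp add: bmult_def binc_nth)
      also have "\<dots> = 0\<^sub>m (ls!k) (ls!k)" using bcarrier_nth[OF qc k(1)] by simp
      finally show ?thesis .
    qed
    define Q where "Q = q ! j"
    have Qc: "Q \<in> carrier_mat ?N ?N" unfolding Q_def using bcarrier_nth[OF qc j] .
    have QF: "Q * mu ?N 0 0 = Q" using arg_cong[OF q(2), of "\<lambda>l. l ! j"] j lq
      by (simp add: bmult_def binc_nth Q_def)
    have QQ: "Q * Q = Q" using arg_cong[OF qq, of "\<lambda>l. l ! j"] j lq by (simp add: bmult_def Q_def)
    have QA: "cadj Q = Q" using arg_cong[OF qa, of "\<lambda>l. l ! j"] j lq by (simp add: badj_def Q_def)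
    have col0: "Q $$ (r,s) = 0" if rs: "r < ?N" "s < ?N" "s \<noteq> 0" for r s
    proof -
      have "Q $$ (r,s) = (Q * mu ?N 0 0) $$ (r,s)" using QF by simp
      also have "\<dots> = (\<Sum>k<?N. Q $$ (r,k) * (if k = 0 \<and> s = 0 then 1 else 0))"
        using rs Qc by (auto simp: mu_def scalar_prod_def lessThan_atLeast0 intro!: sum.cong)
      also have "\<dots> = 0" using rs by simp
      finally show ?thesis .
    qed
    have row0: "Q $$ (r,s) = 0" if rs: "r < ?N" "s < ?N" "r \<noteq> 0" for r s
    proof -
      have "Q $$ (r,s) = cadj Q $$ (r,s)" using QA by simp
      also have "\<dots> = cnj (Q $$ (s,r))" using rs Qc by simp
      also have "\<dots> = 0" using col0[OF rs(2) rs(1) rs(3)] by simp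
      finally show ?thesis .
    qed
    have Q00: "Q $$ (0,0) * Q $$ (0,0) = Q $$ (0,0)"
    proof -
      have "Q $$ (0,0) = (Q * Q) $$ (0,0)" using QQ by simp
      also have "\<dots> = (\<Sum>k<?N. Q $$ (0,k) * Q $$ (k,0))"
        using pos Qc by (auto simp: scalar_prod_def lessThan_atLeast0 intro!: sum.cong)
      also have "\<dots> = (\<Sum>k<?N. if k = 0 then Q $$ (0,0) * Q $$ (0,0) else 0)"
        by (rule sum.cong) (auto simp: col0 pos)
      also have "\<dots> = Q $$ (0,0) * Q $$ (0,0)" using pos by (simp add: sum_if_eq)
      finally show ?thesis by simp
    qed
    hence "Q $$ (0,0) = 0 \<or> Q $$ (0,0) = 1"
      by (metis mult_cancel_right1 mult_eq_0_iff)
    thus ?thesis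
    proof
      assume z: "Q $$ (0,0) = 0"
      have "Q = 0\<^sub>m ?N ?N"
        by (rule eq_matI) (use Qc z col0 row0 in \<open>auto\<close>)
      have "q = bzero ls"
      proof (rule nth_equalityI)
        fix k assume k: "k < length q"
        show "q ! k = bzero ls ! k"
          using k lq other[of k] \<open>Q = 0\<^sub>m ?N ?N\<close> unfolding Q_def by (cases "k = j") (auto simp: bzero_nth)
      qed (simp add: lq)
      thus ?thesis by simp
    next
      assume o: "Q $$ (0,0) = 1"
      have "Q = mu ?N 0 0"
        by (rule eq_matI) (use Qc o col0 row0 in \<open>auto simp: mu_def\<close>)
      have "q = ?p"
      proof (rule nth_equalityI)
        fix k assume k: "k < length q"
        show "q ! k = ?p ! k"
          using k lq other[of k] \<open>Q = mu ?N 0 0\<close> unfolding Q_def by (cases "k = j") (auto simp: binc_nth)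
      qed (simp add: lq)
      thus ?thesis by simp
    qed
  qed
  show ?thesis unfolding min_proj_def using proj nz minim by blast
qed


definition tr :: "complex mat \<Rightarrow> complex" where
  "tr A = (\<Sum>i<dim_row A. A $$ (i,i))"

lemma tr_comm:
  assumes A: "A \<in> carrier_mat m k" and B: "B \<in> carrier_mat k m"
  shows "tr (A * B) = tr (B * A)"
proof -
  have "tr (A * B) = (\<Sum>i<m. \<Sum>j<k. A $$ (i,j) * B $$ (j,i))"
    unfolding tr_def using A B by (auto simp: scalar_prod_def lessThan_atLeast0 intro!: sum.cong)
  also have "\<dots> = (\<Sum>j<k. \<Sum>i<m. B $$ (j,i) * A $$ (i,j))"
    by (subst sum.swap) (simp add: mult.commute)
  also have "\<dots> = tr (B * A)"
    unfolding tr_def using A B by (auto simp: scalar_prod_def lessThan_atLeast0 intro!: sum.cong)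
  finally show ?thesis .
qed

lemma tr_unitary_conj:
  assumes U: "unitary_mat m U" and T: "T \<in> carrier_mat m m"
  shows "tr (U * T * cadj U) = tr T"
proof -
  have Uc: "U \<in> carrier_mat m m" and UU: "cadj U * U = 1\<^sub>m m" using U unfolding unitary_mat_def by auto
  have "tr (U * T * cadj U) = tr (cadj U * (U * T))"
    by (rule tr_comm[of _ m m]) (use Uc T in auto)
  also have "cadj U * (U * T) = (cadj U * U) * T" using Uc T by (simp add: assoc_mult_mat[of _ m m _ m _ m])
  also have "\<dots> = T" using UU T by simp
  finally show ?thesis .
qed

lemma sum_lt_count: "N \<le> m \<Longrightarrow> (\<Sum>r<m. if r < N then (1::complex) else 0) = of_nat N"
proof -
  assume N: "N \<le> m"
  have "(\<Sum>r<m. if r < N then (1::complex) else 0) = (\<Sum>r\<in>{..<m} \<inter> {..<N}. 1)"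
    by (subst sum.inter_restrict) auto
  also have "{..<m} \<inter> {..<N} = {..<N}" using N by auto
  finally show ?thesis by simp
qed

lemma tr_tensor_pad_one:
  assumes n: "0 < n" and nE: "n * E \<le> m"
  shows "tr (tensor_pad n E m (1\<^sub>m n)) = of_nat (n * E)"
proof -
  have "tr (tensor_pad n E m (1\<^sub>m n)) = (\<Sum>r<m. if r < n * E then (1::complex) else 0)"
    unfolding tr_def tensor_pad_def
    by (rule sum.cong) (auto simp: less_mult_imp_div_less)
  thus ?thesis using sum_lt_count[OF nE] by simp
qed

lemma tensor_pad_carrier[simp]: "tensor_pad n E m x \<in> carrier_mat m m"
  by (simp add: tensor_pad_def)

lemma E_unique:
  assumes n: "0 < n" and e1: "n * E \<le> m" and e2: "n * E' \<le> m"
    and U: "unitary_mat m U" and U': "unitary_mat m U'"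
    and eq: "U * tensor_pad n E m (1\<^sub>m n) * cadj U = U' * tensor_pad n E' m (1\<^sub>m n) * cadj U'"
  shows "E = E'"
proof -
  have "of_nat (n * E) = (of_nat (n * E') :: complex)"
    using arg_cong[OF eq, of tr] tr_unitary_conj[OF U] tr_unitary_conj[OF U']
      tr_tensor_pad_one[OF n e1] tr_tensor_pad_one[OF n e2] by simp
  hence "n * E = n * E'" by (simp only: of_nat_eq_iff)
  thus ?thesis using n by simp
qed

lemma Emult_char:
  assumes H: "star_hom ns ms \<phi>" and i: "i < length ns" and j: "j < length ms" and n: "0 < ns!i"
  shows "ns!i * Emult ns ms \<phi> i j \<le> ms!j \<and>
     (\<exists>U. unitary_mat (ms ! j) U \<and>
       (\<forall>x\<in>carrier_mat (ns ! i) (ns ! i).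
          (\<phi> (binc ns i x)) ! j = U * tensor_pad (ns ! i) (Emult ns ms \<phi> i j) (ms ! j) x * cadj U))"
proof -
  define Pr where "Pr E \<longleftrightarrow> ns ! i * E \<le> ms ! j \<and>
     (\<exists>U. unitary_mat (ms ! j) U \<and>
       (\<forall>x\<in>carrier_mat (ns ! i) (ns ! i).
          (\<phi> (binc ns i x)) ! j = U * tensor_pad (ns ! i) E (ms ! j) x * cadj U))" for E
  have ex: "\<exists>E. Pr E" unfolding Pr_def
    using rep_structure[OF starrep_from_hom[OF H i j] n] by blast
  have un: "E = E'" if P1: "Pr E" and P2: "Pr E'" for E E'
  proof -
    obtain U where U: "ns ! i * E \<le> ms ! j" "unitary_mat (ms ! j) U"
      "\<And>x. x \<in> carrier_mat (ns ! i) (ns ! i) \<Longrightarrow> (\<phi> (binc ns i x)) ! j = U * tensor_pad (ns ! i) E (ms ! j) x * cadj U"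
      using P1 unfolding Pr_def by blast
    obtain U' where U': "ns ! i * E' \<le> ms ! j" "unitary_mat (ms ! j) U'"
      "\<And>x. x \<in> carrier_mat (ns ! i) (ns ! i) \<Longrightarrow> (\<phi> (binc ns i x)) ! j = U' * tensor_pad (ns ! i) E' (ms ! j) x * cadj U'"
      using P2 unfolding Pr_def by blast
    show ?thesis
      by (rule E_unique[OF n U(1) U'(1) U(2) U'(2)]) (use U(3)[of "1\<^sub>m (ns!i)"] U'(3)[of "1\<^sub>m (ns!i)"] in simp)
  qed
  have "Pr (THE E. Pr E)" by (rule theI') (use ex un in blast)
  moreover have "Emult ns ms \<phi> i j = (THE E. Pr E)" unfolding Emult_def Pr_def ..
  ultimately show ?thesis unfolding Pr_def by simp
qed


definition outer :: "complex vec \<Rightarrow> complex mat" where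
  "outer v = mat (dim_vec v) (dim_vec v) (\<lambda>(a,b). v$a * cnj (v$b))"

lemma outer_dims[simp]: "dim_row (outer v) = dim_vec v" "dim_col (outer v) = dim_vec v"
  by (simp_all add: outer_def)

lemma outer_carrier[simp]: "v \<in> carrier_vec d \<Longrightarrow> outer v \<in> carrier_mat d d"
  by (simp add: outer_def)

lemma outer_mult_vec:
  assumes v: "v \<in> carrier_vec d" and w: "w \<in> carrier_vec d"
  shows "outer v *\<^sub>v w = ip w v \<cdot>\<^sub>v v"
proof (rule eq_vecI)
  fix a assume a: "a < dim_vec (ip w v \<cdot>\<^sub>v v)"
  hence a': "a < d" using v by simp
  have "(outer v *\<^sub>v w) $ a = (\<Sum>b<d. outer v $$ (a,b) * w $ b)" by (rule mv_index[OF outer_carrier[OF v] w a'])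
  also have "\<dots> = v $ a * (\<Sum>b<d. w $ b * cnj (v $ b))"
    using a' v by (auto simp: outer_def sum_distrib_left intro!: sum.cong)
  also have "\<dots> = (ip w v \<cdot>\<^sub>v v) $ a" using a' v w by (simp add: ip_def)
  finally show "(outer v *\<^sub>v w) $ a = (ip w v \<cdot>\<^sub>v v) $ a" .
qed (use v in simp)

lemma outer_idem:
  assumes v: "v \<in> carrier_vec d" and vv: "ip v v = 1"
  shows "outer v * outer v = outer v"
proof (rule eq_matI)
  fix a b assume ab: "a < dim_row (outer v)" "b < dim_col (outer v)"
  hence ab': "a < d" "b < d" using v by auto
  have "(outer v * outer v) $$ (a,b) = (\<Sum>c<d. (v$a * cnj (v$c)) * (v$c * cnj (v$b)))"
    using ab' v by (auto simp: outer_def scalar_prod_def lessThan_atLeast0 intro!: sum.cong)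
  also have "\<dots> = v$a * cnj (v$b) * (\<Sum>c<d. v$c * cnj (v$c))"
    by (auto simp: sum_distrib_left intro!: sum.cong simp: algebra_simps)
  also have "(\<Sum>c<d. v$c * cnj (v$c)) = 1" using vv v by (simp add: ip_def)
  finally show "(outer v * outer v) $$ (a,b) = outer v $$ (a,b)" using ab' v by (simp add: outer_def)
qed (use v in auto)

lemma outer_adj: "cadj (outer v) = outer v"
  by (auto simp: cadj_def outer_def intro!: eq_matI)

lemma outer_nonzero:
  assumes v: "v \<in> carrier_vec d" and vv: "ip v v = 1"
  shows "outer v \<noteq> 0\<^sub>m d d"
proof
  assume z: "outer v = 0\<^sub>m d d"
  have "v = 0\<^sub>v d"
  proof (rule eq_vecI)
    fix a assume a: "a < dim_vec (0\<^sub>v d)"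
    have "outer v $$ (a,a) = 0" using z a by simp
    hence "v$a * cnj (v$a) = 0" using a v by (simp add: outer_def)
    thus "v $ a = 0\<^sub>v d $ a" using a by simp
  qed (use v in simp)
  thus False using vv by simp
qed

lemma min_proj_char:
  assumes mp: "min_proj ls q"
  shows "\<exists>j<length ls. \<exists>v\<in>carrier_vec (ls!j). ip v v = 1 \<and> q = binc ls j (outer v)"
proof -
  have qc: "q \<in> bcarrier ls" and qq: "bmult q q = q" and qa: "badj q = q" and nz: "q \<noteq> bzero ls"
    and minim: "\<And>r. is_proj ls r \<Longrightarrow> bmult r q = r \<Longrightarrow> r = bzero ls \<or> r = q"
    using mp unfolding min_proj_def is_proj_def by auto
  have lq: "length q = length ls" using bcarrier_length[OF qc] .
  obtain j where j: "j < length ls" and Qnz: "q ! j \<noteq> 0\<^sub>m (ls!j) (ls!j)"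
  proof -
    have "\<exists>j<length ls. q ! j \<noteq> 0\<^sub>m (ls!j) (ls!j)"
    proof (rule ccontr)
      assume "\<not> ?thesis"
      hence "q = bzero ls" by (intro nth_equalityI) (auto simp: lq bzero_nth)
      thus False using nz by simp
    qed
    thus ?thesis using that by blast
  qed
  define N where "N = ls!j"
  define Q where "Q = q ! j"
  have Qc: "Q \<in> carrier_mat N N" unfolding Q_def N_def using bcarrier_nth[OF qc j] .
  have QQ: "Q * Q = Q" using arg_cong[OF qq, of "\<lambda>l. l ! j"] j lq by (simp add: bmult_def Q_def)
  have QA: "cadj Q = Q" using arg_cong[OF qa, of "\<lambda>l. l ! j"] j lq by (simp add: badj_def Q_def)
  obtain r s where rs: "r < N" "s < N" "Q $$ (r,s) \<noteq> 0"
  proof -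
    have "\<exists>r s. r < N \<and> s < N \<and> Q $$ (r,s) \<noteq> 0"
    proof (rule ccontr)
      assume "\<not> ?thesis"
      hence "Q = 0\<^sub>m N N" by (intro eq_matI) (use Qc in auto)
      thus False using Qnz unfolding Q_def N_def by simp
    qed
    thus ?thesis using that by blast
  qed
  define y where "y = col Q s"
  have yc: "y \<in> carrier_vec N" unfolding y_def using Qc by (metis carrier_matD(1) carrier_vecI col_dim)
  have ynz: "y \<noteq> 0\<^sub>v N"
  proof
    assume "y = 0\<^sub>v N"
    hence "y $ r = 0" using rs by simp
    thus False using rs Qc unfolding y_def by simp
  qed
  have Qy: "Q *\<^sub>v y = y"
  proof -
    have "Q *\<^sub>v y = col (Q * Q) s" unfolding y_def using Qc rs by simp
    thus ?thesis using QQ unfolding y_def by simp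
  qed
  obtain c where c: "c \<noteq> 0" "ip (c \<cdot>\<^sub>v y) (c \<cdot>\<^sub>v y) = 1" using normalize_vec[OF yc ynz] by blast
  define v where "v = c \<cdot>\<^sub>v y"
  have vc: "v \<in> carrier_vec N" unfolding v_def using yc by simp
  have vv: "ip v v = 1" unfolding v_def using c by simp
  have Qv: "Q *\<^sub>v v = v" unfolding v_def using mult_mat_vec[OF Qc yc] Qy by simp
  have oQ: "outer v * Q = outer v"
  proof (rule eq_matI)
    fix a b assume ab: "a < dim_row (outer v)" "b < dim_col (outer v)"
    hence ab': "a < N" "b < N" using vc by auto
    have "(outer v * Q) $$ (a,b) = (\<Sum>k<N. (v$a * cnj (v$k)) * Q $$ (k,b))"
      using ab' vc Qc by (auto simp: outer_def scalar_prod_def lessThan_atLeast0 intro!: sum.cong)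
    also have "\<dots> = v$a * cnj (\<Sum>k<N. Q $$ (b,k) * v$k)"
    proof -
      have "Q $$ (k,b) = cnj (Q $$ (b,k))" if "k < N" for k
        using arg_cong[OF QA, of "\<lambda>M. M $$ (k,b)"] that ab' Qc by simp
      thus ?thesis by (auto simp: sum_distrib_left algebra_simps intro!: sum.cong)
    qed
    also have "(\<Sum>k<N. Q $$ (b,k) * v$k) = (Q *\<^sub>v v) $ b" using mv_index[OF Qc vc ab'(2)] by simp
    also have "\<dots> = v $ b" using Qv by simp
    finally show "(outer v * Q) $$ (a,b) = outer v $$ (a,b)" using ab' vc by (simp add: outer_def)
  qed (use vc Qc in auto)
  define p where "p = binc ls j (outer v)"
  have pc: "p \<in> bcarrier ls" unfolding p_def using binc_carrier[OF j] vc N_def by simp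
  have pp: "bmult p p = p" unfolding p_def
    using binc_mult[OF j, of "outer v" "outer v"] outer_idem[OF vc vv] vc N_def by simp
  have pa: "badj p = p" unfolding p_def using binc_adj outer_adj by metis
  have pq: "bmult p q = p"
  proof (rule nth_equalityI)
    show "length (bmult p q) = length p" unfolding p_def using lq by (simp add: bmult_def)
  next
    fix k assume k: "k < length (bmult p q)"
    hence k': "k < length ls" unfolding p_def using lq by (simp add: bmult_def)
    show "bmult p q ! k = p ! k"
    proof (cases "k = j")
      case True thus ?thesis using k' lq oQ unfolding p_def Q_def by (simp add: bmult_def binc_nth)
    next
      case False thus ?thesis using k' lq bcarrier_nth[OF qc k'] unfolding p_def by (simp add: bmult_def binc_nth)
    qed
  qed
  have pnz: "p \<noteq> bzero ls"
  proof
    assume "p = bzero ls"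
    hence "p ! j = bzero ls ! j" by simp
    hence "outer v = 0\<^sub>m N N" using j unfolding p_def N_def by (simp add: binc_nth bzero_nth)
    thus False using outer_nonzero[OF vc vv] by simp
  qed
  have "p = q" using minim[of p] pc pp pa pq pnz unfolding is_proj_def by blast
  thus ?thesis using j vc vv unfolding p_def N_def by blast
qed


lemma vnorm_zero[simp]: "vnorm (0\<^sub>v k) = 0" by (simp add: vnorm_def)

lemma vnorm_neg: "w \<in> carrier_vec m \<Longrightarrow> vnorm (0\<^sub>v m - w) = vnorm w"
  unfolding vnorm_def by (auto intro!: arg_cong[where f = sqrt] sum.cong)

lemma opnorm_zero: "opnorm (0\<^sub>m a b) = 0"
proof -
  have "{vnorm (0\<^sub>m a b *\<^sub>v v) | v. v \<in> carrier_vec (dim_col (0\<^sub>m a b)) \<and> vnorm v \<le> 1} = {0}"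
  proof
    show "{0} \<subseteq> {vnorm (0\<^sub>m a b *\<^sub>v v) | v. v \<in> carrier_vec (dim_col (0\<^sub>m a b)) \<and> vnorm v \<le> 1}"
      by (auto intro!: exI[of _ "0\<^sub>v b"])
  qed auto
  thus ?thesis unfolding opnorm_def by simp
qed

lemma bnorm_nonneg: "0 \<le> bnorm xs"
  unfolding bnorm_def by (rule Max_ge) auto

lemma bnorm_ge: "k < length xs \<Longrightarrow> opnorm (xs ! k) \<le> bnorm xs"
  unfolding bnorm_def by (rule Max_ge) auto

lemma bnorm_bsub_self:
  assumes "xs \<in> bcarrier ls"
  shows "bnorm (bsub xs xs) = 0"
proof -
  have "opnorm ` set (bsub xs xs) \<subseteq> {0}"
  proof
    fix r assume "r \<in> opnorm ` set (bsub xs xs)"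
    then obtain k where k: "k < length xs" "r = opnorm (xs!k - xs!k)"
      by (auto simp: bsub_def in_set_conv_nth)
    have "xs!k \<in> carrier_mat (ls!k) (ls!k)" using bcarrier_nth[OF assms] k bcarrier_length[OF assms] by simp
    hence "xs!k - xs!k = 0\<^sub>m (ls!k) (ls!k)" by simp
    thus "r \<in> {0}" using k opnorm_zero by simp
  qed
  hence e: "insert 0 (opnorm ` set (bsub xs xs)) = {0}" by auto
  show ?thesis unfolding bnorm_def e by simp
qed

lemma rho_min_zero:
  assumes "min_proj ls p"
  shows "rho_min ls p = 0"
proof -
  have pc: "p \<in> bcarrier ls" using assms unfolding min_proj_def is_proj_def by simp
  show ?thesis unfolding rho_min_def
    by (rule cInf_eq_minimum) (use assms bnorm_bsub_self[OF pc] bnorm_nonneg in auto)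
qed

lemma rho_small:
  assumes r: "rho_min ls x = 0" and q0: "min_proj ls q0"
  shows "\<exists>q. min_proj ls q \<and> bnorm (bsub x q) < 1"
proof -
  let ?S = "{bnorm (bsub x p) | p. min_proj ls p}"
  have ne: "?S \<noteq> {}" using q0 by auto
  have bb: "bdd_below ?S" using bnorm_nonneg by (auto simp: bdd_below_def)
  have "Inf ?S < 1" using r unfolding rho_min_def by simp
  then obtain s where "s \<in> ?S" "s < 1" using cInf_less_iff[OF ne bb] by blast
  thus ?thesis by auto
qed

lemma opnorm_contra:
  assumes D: "D \<in> carrier_mat m m" and w: "w \<in> carrier_vec m" "ip w w = 1" and Dw: "vnorm (D *\<^sub>v w) = 1"
  shows "1 \<le> opnorm D"
proof -
  have "vnorm w = 1" using w(2) vnorm_one_iff by simp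
  thus ?thesis using opnorm_ge[OF D w(1)] Dw by simp
qed

lemma two_vec:
  assumes P: "P \<in> carrier_mat m m" and v: "v \<in> carrier_vec m"
    and u0: "u0 \<in> carrier_vec m" and u1: "u1 \<in> carrier_vec m"
    and o: "ip u0 u0 = 1" "ip u1 u1 = 1" "ip u0 u1 = 0"
    and Pu: "P *\<^sub>v u0 = u0" "P *\<^sub>v u1 = u1"
  shows "\<exists>w \<in> carrier_vec m. ip w w = 1 \<and> P *\<^sub>v w = w \<and> ip w v = 0"
proof (cases "ip u0 v = 0")
  case True thus ?thesis using u0 o Pu by blast
next
  case False
  define \<alpha> where "\<alpha> = ip u1 v"
  define \<beta> where "\<beta> = ip u0 v"
  define w0 where "w0 = \<alpha> \<cdot>\<^sub>v u0 - \<beta> \<cdot>\<^sub>v u1"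
  have w0c: "w0 \<in> carrier_vec m" unfolding w0_def using u0 u1 by simp
  have w0v: "ip w0 v = 0" unfolding w0_def
    using ip_minus_left[of "\<alpha> \<cdot>\<^sub>v u0" m "\<beta> \<cdot>\<^sub>v u1" v] u0 u1
    by (simp add: ip_smult_left \<alpha>_def \<beta>_def)
  have Pw0: "P *\<^sub>v w0 = w0" unfolding w0_def
    using mult_minus_distrib_mat_vec[OF P, of "\<alpha> \<cdot>\<^sub>v u0" "\<beta> \<cdot>\<^sub>v u1"] u0 u1
      mult_mat_vec[OF P u0] mult_mat_vec[OF P u1] Pu by simp
  have "ip w0 u1 = - \<beta>" unfolding w0_def
    using ip_minus_left[of "\<alpha> \<cdot>\<^sub>v u0" m "\<beta> \<cdot>\<^sub>v u1" u1] u0 u1 o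
    by (simp add: ip_smult_left)
  hence w0nz: "w0 \<noteq> 0\<^sub>v m" using False unfolding \<beta>_def by auto
  obtain c where c: "c \<noteq> 0" "ip (c \<cdot>\<^sub>v w0) (c \<cdot>\<^sub>v w0) = 1" using normalize_vec[OF w0c w0nz] by blast
  have "P *\<^sub>v (c \<cdot>\<^sub>v w0) = c \<cdot>\<^sub>v w0" using mult_mat_vec[OF P w0c] Pw0 by simp
  moreover have "ip (c \<cdot>\<^sub>v w0) v = 0" using w0v by (simp add: ip_smult_left)
  ultimately show ?thesis using c w0c by (intro bexI[of _ "c \<cdot>\<^sub>v w0"]) auto
qed

lemma ip_unit_vec: "r < m \<Longrightarrow> s < m \<Longrightarrow> ip (unit_vec m r) (unit_vec m s) = (if r = s then 1 else 0)"
proof -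
  assume rs: "r < m" "s < m"
  have "ip (unit_vec m r) (unit_vec m s) = (\<Sum>i<m. if i = r then (if r = s then 1 else 0) else 0)"
    unfolding ip_def by (rule sum.cong) (auto simp: unit_vec_def)
  also have "\<dots> = (if r = s then 1 else 0)" using rs by (simp add: sum_if_eq)
  finally show ?thesis .
qed

lemma proj_facts:
  assumes n: "0 < n" and nE: "n * E \<le> m" and U: "unitary_mat m U"
    and Pj: "Pj = U * tensor_pad n E m (mu n 0 0) * cadj U"
  shows "E = 0 \<Longrightarrow> Pj = 0\<^sub>m m m"
    and "\<And>r. r < E \<Longrightarrow> Pj *\<^sub>v (U *\<^sub>v unit_vec m r) = U *\<^sub>v unit_vec m r"
    and "\<And>r. r < E \<Longrightarrow> U *\<^sub>v unit_vec m r \<in> carrier_vec m"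
    and "\<And>r s. r < E \<Longrightarrow> s < E \<Longrightarrow> ip (U *\<^sub>v unit_vec m r) (U *\<^sub>v unit_vec m s) = (if r = s then 1 else 0)"
proof -
  let ?T = "tensor_pad n E m (mu n 0 0)"
  have Uc: "U \<in> carrier_mat m m" and UU: "cadj U * U = 1\<^sub>m m" using U unfolding unitary_mat_def by auto
  have EnE: "E \<le> n * E" using n by simp
  have Em: "E \<le> m" using nE EnE by linarith
  {
    assume E: "E = 0"
    have "?T = 0\<^sub>m m m" using E by (auto simp: tensor_pad_def intro!: eq_matI)
    thus "Pj = 0\<^sub>m m m" using Pj Uc by simp
  }
  have Te: "?T *\<^sub>v unit_vec m r = unit_vec m r" if r: "r < E" for r
  proof (rule eq_vecI)
    fix s assume s: "s < dim_vec (unit_vec m r)"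
    hence s': "s < m" by simp
    have rm: "r < m" using r Em by simp
    have "(?T *\<^sub>v unit_vec m r) $ s = (\<Sum>c<m. ?T $$ (s,c) * unit_vec m r $ c)"
      by (rule mv_index[OF tensor_pad_carrier _ s']) simp
    also have "\<dots> = (\<Sum>c<m. if c = r then ?T $$ (s,r) else 0)"
      by (rule sum.cong) (auto simp: unit_vec_def)
    also have "\<dots> = ?T $$ (s,r)" using rm by (simp add: sum_if_eq)
    also have "\<dots> = unit_vec m r $ s"
    proof -
      have E0: "0 < E" using r by simp
      have rE: "r div E = 0" "r mod E = r" using r by auto
      have rnE: "r < n * E" using r EnE by linarith
      show ?thesis
      proof (cases "s < n * E")
        case True
        have sdiv: "s div E < n" using True by (simp add: less_mult_imp_div_less)
        have iff: "s div E = 0 \<and> s mod E = r \<longleftrightarrow> s = r" using rE by (metis div_mult_mod_eq add_0 mult_zero_left)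
        have "?T $$ (s,r) = (if s mod E = r mod E then mu n 0 0 $$ (s div E, r div E) else 0)"
          using True rnE s' rm by (simp add: tensor_pad_def)
        also have "\<dots> = (if s div E = 0 \<and> s mod E = r then 1 else 0)" using rE sdiv n by (simp add: mu_def)
        also have "\<dots> = unit_vec m r $ s" using iff s' by (simp add: unit_vec_def)
        finally show ?thesis .
      next
        case False
        hence "s \<noteq> r" using rnE by auto
        thus ?thesis using False s' rm by (auto simp: tensor_pad_def unit_vec_def)
      qed
    qed
    finally show "(?T *\<^sub>v unit_vec m r) $ s = unit_vec m r $ s" .
  qed (simp add: tensor_pad_def)
  have ue: "cadj U *\<^sub>v (U *\<^sub>v unit_vec m r) = unit_vec m r" for r
  proof -
    have "cadj U *\<^sub>v (U *\<^sub>v unit_vec m r) = (cadj U * U) *\<^sub>v unit_vec m r"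
      using Uc by (simp add: assoc_mult_mat_vec[of _ m m _ m])
    thus ?thesis using UU by simp
  qed
  show "U *\<^sub>v unit_vec m r \<in> carrier_vec m" for r using Uc by simp
  show "Pj *\<^sub>v (U *\<^sub>v unit_vec m r) = U *\<^sub>v unit_vec m r" if r: "r < E" for r
    unfolding Pj using mult3_vec[OF Uc tensor_pad_carrier cadj_carrier[OF Uc], of "U *\<^sub>v unit_vec m r"] Uc ue Te[OF r]
    by simp
  show "ip (U *\<^sub>v unit_vec m r) (U *\<^sub>v unit_vec m s) = (if r = s then 1 else 0)" if r: "r < E" and s: "s < E" for r s
  proof -
    have "ip (U *\<^sub>v unit_vec m r) (U *\<^sub>v unit_vec m s) = ip (unit_vec m r) (cadj U *\<^sub>v (U *\<^sub>v unit_vec m s))"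
      by (rule ip_adj[OF Uc]) (use Uc in auto)
    also have "\<dots> = (if r = s then 1 else 0)" using ue ip_unit_vec r s Em by simp
    finally show ?thesis .
  qed
qed


lemma vnorm_uminus: "vnorm (- w) = vnorm w"
  unfolding vnorm_def by (auto intro!: arg_cong[where f = sqrt] sum.cong)

lemma zero_smult_vec': "(v::complex vec) \<in> carrier_vec m \<Longrightarrow> 0 \<cdot>\<^sub>v v = 0\<^sub>v m"
  by (rule eq_vecI) auto

theorem lemma2p5:
  fixes ns ms :: "nat list" and \<phi> :: "complex mat list \<Rightarrow> complex mat list"
  assumes "\<forall>n\<in>set ns. 0 < n"
    and "\<forall>m\<in>set ms. 0 < m"
    and "unital_inj_star_hom ns ms \<phi>"
    and "Lmin_embedding ns ms \<phi>"
  shows "\<forall>i<length ns. mult ns ms \<phi> i = 1"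
proof (intro allI impI)
  fix i assume i: "i < length ns"
  define n where "n = ns!i"
  have n: "0 < n" using assms(1) i unfolding n_def by auto
  have H: "star_hom ns ms \<phi>" and one: "\<phi> (bone ns) = bone ms" and inj: "inj_on \<phi> (bcarrier ns)"
    using assms(3) unfolding unital_inj_star_hom_def by auto
  have rho: "\<And>a. a \<in> bcarrier ns \<Longrightarrow> rho_min ms (\<phi> a) = rho_min ns a"
    using assms(4) unfolding Lmin_embedding_def by auto
  have hc: "\<And>a. a \<in> bcarrier ns \<Longrightarrow> \<phi> a \<in> bcarrier ms" using H unfolding star_hom_def by auto
  define p where "p = binc ns i (mu n 0 0)"
  have pmp: "min_proj ns p" unfolding p_def n_def by (rule min_proj_mu[OF i]) (use n n_def in simp)
  have pc: "p \<in> bcarrier ns" unfolding p_def using binc_carrier[OF i] n_def by simp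
  have r0: "rho_min ms (\<phi> p) = 0" using rho[OF pc] rho_min_zero[OF pmp] by simp
  have msne: "0 < length ms"
  proof (rule ccontr)
    assume "\<not> 0 < length ms"
    hence ms: "ms = []" by simp
    have b1: "bone ns \<in> bcarrier ns" by (auto simp: bcarrier_def bone_def)
    have b0: "bzero ns \<in> bcarrier ns" by (auto simp: bcarrier_def bzero_def)
    have "\<phi> (bzero ns) = []" using hc[OF b0] ms by (simp add: bcarrier_def)
    moreover have "\<phi> (bone ns) = []" using one ms by (simp add: bone_def)
    ultimately have "bone ns = bzero ns" using inj b0 b1 by (metis inj_onD)
    hence "bone ns ! i $$ (0,0) = bzero ns ! i $$ (0,0)" by simp
    thus False using i n unfolding n_def by (simp add: bone_def bzero_def)
  qed
  have q0: "min_proj ms (binc ms 0 (mu (ms!0) 0 0))"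
    by (rule min_proj_mu[OF msne]) (use assms(2) msne in simp)
  obtain q where q: "min_proj ms q" "bnorm (bsub (\<phi> p) q) < 1" using rho_small[OF r0 q0] by blast
  obtain j0 v where j0: "j0 < length ms" "v \<in> carrier_vec (ms!j0)" "ip v v = 1" "q = binc ms j0 (outer v)"
    using min_proj_char[OF q(1)] by blast
  have phic: "\<phi> p \<in> bcarrier ms" by (rule hc[OF pc])
  have lphi: "length (\<phi> p) = length ms" using bcarrier_length[OF phic] .
  have qc: "q \<in> bcarrier ms" using q(1) unfolding min_proj_def is_proj_def by simp
  have lq: "length q = length ms" using bcarrier_length[OF qc] .
  have Ej: "Emult ns ms \<phi> i j = (if j = j0 then 1 else 0)" if j: "j < length ms" for j
  proof -
    define mj where "mj = ms!j"
    define E where "E = Emult ns ms \<phi> i j"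
    obtain U where nE: "n * E \<le> mj" and U: "unitary_mat mj U"
      and rep: "\<And>x. x \<in> carrier_mat n n \<Longrightarrow> \<phi> (binc ns i x) ! j = U * tensor_pad n E mj x * cadj U"
      using Emult_char[OF H i j n[unfolded n_def]] unfolding n_def[symmetric] E_def[symmetric] mj_def[symmetric]
      by blast
    define Pj where "Pj = \<phi> p ! j"
    have PjU: "Pj = U * tensor_pad n E mj (mu n 0 0) * cadj U" unfolding Pj_def p_def using rep[OF mu_carrier] .
    note pf = proj_facts[OF n nE U PjU]
    have Pjc: "Pj \<in> carrier_mat mj mj" unfolding Pj_def mj_def using bcarrier_nth[OF phic j] .
    have qjc: "q!j \<in> carrier_mat mj mj" unfolding mj_def using bcarrier_nth[OF qc j] .
    have "opnorm (bsub (\<phi> p) q ! j) \<le> bnorm (bsub (\<phi> p) q)"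
      by (rule bnorm_ge) (use j lphi lq in \<open>simp add: bsub_def\<close>)
    moreover have "bsub (\<phi> p) q ! j = Pj - q!j" unfolding Pj_def using j lphi lq by (simp add: bsub_def)
    ultimately have small: "opnorm (Pj - q!j) < 1" using q(2) by simp
    have contra: False if w: "w \<in> carrier_vec mj" "ip w w = 1" "vnorm ((Pj - q!j) *\<^sub>v w) = 1" for w
      using opnorm_contra[OF minus_carrier_mat[OF qjc] w] small by simp
    have Uw: "vnorm (U *\<^sub>v unit_vec mj r) = 1" if "r < E" for r
      using pf(4)[OF that that] vnorm_one_iff by simp
    show ?thesis
    proof (cases "j = j0")
      case False
      have qj: "q!j = 0\<^sub>m mj mj" using j0(4) j False unfolding mj_def by (simp add: binc_nth)
      have "E = 0"
      proof (rule ccontr)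
        assume "E \<noteq> 0"
        hence E0: "0 < E" by simp
        define w where "w = U *\<^sub>v unit_vec mj 0"
        have wc: "w \<in> carrier_vec mj" unfolding w_def using pf(3)[OF E0] .
        have "(Pj - q!j) *\<^sub>v w = Pj *\<^sub>v w - q!j *\<^sub>v w"
          by (rule minus_mult_distrib_mat_vec[OF Pjc qjc wc])
        also have "\<dots> = w" using pf(2)[OF E0] wc unfolding w_def[symmetric] qj by simp
        finally show False using contra[OF wc] pf(4)[OF E0 E0] Uw[OF E0] unfolding w_def by simp
      qed
      thus ?thesis using False unfolding E_def by simp
    next
      case True
      have qj: "q!j = outer v" using j0(4) j True by (simp add: binc_nth)
      have vc: "v \<in> carrier_vec mj" using j0(2) True unfolding mj_def by simp
      have ov: "outer v \<in> carrier_mat mj mj" using vc by simp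
      have "E \<noteq> 0"
      proof
        assume E0: "E = 0"
        have "(Pj - q!j) *\<^sub>v v = Pj *\<^sub>v v - outer v *\<^sub>v v"
          using minus_mult_distrib_mat_vec[OF Pjc ov vc] qj by simp
        also have "\<dots> = - v" using pf(1)[OF E0] outer_mult_vec[OF vc vc] j0(3) vc by simp
        finally have "vnorm ((Pj - q!j) *\<^sub>v v) = 1" using vnorm_uminus[of v] j0(3) vnorm_one_iff by simp
        thus False using contra[OF vc j0(3)] by simp
      qed
      moreover have "\<not> 2 \<le> E"
      proof
        assume E2: "2 \<le> E"
        have l0: "0 < E" "1 < E" using E2 by auto
        have o1: "ip (U *\<^sub>v unit_vec mj 0) (U *\<^sub>v unit_vec mj 0) = 1" using pf(4)[OF l0(1) l0(1)] by simp
        have o2: "ip (U *\<^sub>v unit_vec mj 1) (U *\<^sub>v unit_vec mj 1) = 1" using pf(4)[OF l0(2) l0(2)] by simp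
        have o3: "ip (U *\<^sub>v unit_vec mj 0) (U *\<^sub>v unit_vec mj 1) = 0" using pf(4)[OF l0(1) l0(2)] by simp
        obtain w where w: "w \<in> carrier_vec mj" "ip w w = 1" "Pj *\<^sub>v w = w" "ip w v = 0"
          using two_vec[OF Pjc vc pf(3)[OF l0(1)] pf(3)[OF l0(2)] o1 o2 o3 pf(2)[OF l0(1)] pf(2)[OF l0(2)]] by auto
        have "(Pj - q!j) *\<^sub>v w = Pj *\<^sub>v w - outer v *\<^sub>v w"
          using minus_mult_distrib_mat_vec[OF Pjc ov w(1)] qj by simp
        also have "\<dots> = w" using w outer_mult_vec[OF vc w(1)] vc zero_smult_vec'[OF vc] by simp
        finally have "vnorm ((Pj - q!j) *\<^sub>v w) = 1" using w(2) vnorm_one_iff by simp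
        thus False using contra[OF w(1) w(2)] by simp
      qed
      ultimately have "E = 1" by simp
      thus ?thesis using True unfolding E_def by simp
    qed
  qed
  have "mult ns ms \<phi> i = (\<Sum>j<length ms. if j = j0 then 1 else 0)"
    unfolding mult_def by (rule sum.cong) (auto simp: Ej)
  also have "\<dots> = 1" using j0(1) by simp
  finally show "mult ns ms \<phi> i = 1" .
qed


end
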